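(* For every integer $t\geq3$ there exists $C(t)\in(0,\infty)$ such that the following holds. Let $A_1,\dots,A_k\in\Pi_n^{(t)}$, let $\epsilon_1,\dots,\epsilon_k$ be independent uniformly distributed $\{-1,1\}$-valued random variables, and let $\mathbf d=(d_1,\dots,d_t)\in[n]^t$, $\min(\mathbf d)=\min\{d_1,\dots,d_t\}$, $\max(\mathbf d)=\max\{d_1,\dots,d_t\}$. Then $$\mathbb{E}\Big[\max\Big\{\sum_{i=1}^k\epsilon_iA_i(\mathbf x): x[s]\in H^n_{d_s},\ s\in[t]\Big\}\Big]\leq C(t)\sqrt{k\max(\mathbf d)\log n}\,\min(\mathbf d)^{1-\frac1{2t}}.$$
   Context: $H^n_d=\{x\in\{-1,0,1\}^n:\ x\text{ has exactly }\min\{d,n\}\text{ nonzero entries}\}$; $A(\mathbf x)=A(x[1],\dots,x[t])$. A $t$-linear form $A$ on $\mathbb{R}^n$ is plane sub-stochastic if $A(e_{s_1},\dots,e_{s_t})\geq0$ on standard basis vectors and $A(\mathbf 1,\dots,\mathbf 1,e_s,\mathbf 1,\dots,\mathbf 1)\leq1$ for every $s\in[n]$ and every position of $e_s$; $\Pi_n^{(t)}$ is the set of $t$-linear forms $A$ such that the form $|A|$ with $|A|(e_{s_1},\dots,e_{s_t})=|A(e_{s_1},\dots,e_{s_t})|$ is plane sub-stochastic. *)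

theory Defs
  imports "HOL-Analysis.Analysis"
begin

(* Index conventions: [n] is rendered as {..<n}; a vector in R^n is a function
   nat => real (only entries < n matter); a t-tuple of indices / vectors is a
   function on {..<t}. *)

definition idx_tuples :: "nat \<Rightarrow> nat \<Rightarrow> (nat \<Rightarrow> nat) set" where
  "idx_tuples n t = Pi\<^sub>E {..<t} (\<lambda>_. {..<n})"

(* A t-linear form on R^n is given by its coefficient tensor
   a(s) = A(e_{s_1},...,e_{s_t}); its value on x[1],...,x[t] is the multilinear
   expansion. *)
definition form_eval :: "nat \<Rightarrow> nat \<Rightarrow> ((nat \<Rightarrow> nat) \<Rightarrow> real) \<Rightarrow> (nat \<Rightarrow> nat \<Rightarrow> real) \<Rightarrow> real" where
  "form_eval n t a X = (\<Sum>s\<in>idx_tuples n t. a s * (\<Prod>j<t. X j (s j)))"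

definition plane_substochastic :: "nat \<Rightarrow> nat \<Rightarrow> ((nat \<Rightarrow> nat) \<Rightarrow> real) \<Rightarrow> bool" where
  "plane_substochastic n t b \<longleftrightarrow>
     (\<forall>s\<in>idx_tuples n t. b s \<ge> 0) \<and>
     (\<forall>j<t. \<forall>s<n. form_eval n t b (\<lambda>i. if i = j then (\<lambda>m. if m = s then 1 else 0) else (\<lambda>_. 1)) \<le> 1)"

definition Pi_forms :: "nat \<Rightarrow> nat \<Rightarrow> ((nat \<Rightarrow> nat) \<Rightarrow> real) set" where
  "Pi_forms n t = {a. plane_substochastic n t (\<lambda>s. \<bar>a s\<bar>)}"

definition H :: "nat \<Rightarrow> nat \<Rightarrow> (nat \<Rightarrow> real) set" where
  "H n d = {x \<in> Pi\<^sub>E {..<n} (\<lambda>_. {-1, 0, 1}). card {i\<in>{..<n}. x i \<noteq> 0} = min d n}"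

definition H_tuples :: "nat \<Rightarrow> nat \<Rightarrow> (nat \<Rightarrow> nat) \<Rightarrow> (nat \<Rightarrow> nat \<Rightarrow> real) set" where
  "H_tuples n t d = Pi\<^sub>E {..<t} (\<lambda>s. H n (d s))"

definition exp_max :: "nat \<Rightarrow> nat \<Rightarrow> nat \<Rightarrow> (nat \<Rightarrow> (nat \<Rightarrow> nat) \<Rightarrow> real) \<Rightarrow> (nat \<Rightarrow> nat) \<Rightarrow> real" where
  "exp_max n t k A d =
     (\<Sum>\<epsilon>\<in>Pi\<^sub>E {..<k} (\<lambda>_. {-1::real, 1}).
        Max ((\<lambda>X. \<Sum>i<k. \<epsilon> i * form_eval n t (A i) X) ` H_tuples n t d)) / 2 ^ k"

end

theory Submission
  imports Defs "HOL-Probability.Hoeffding"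
begin

lemma cosh_bound: "exp x + exp (-x) \<le> 2 * exp (x\<^sup>2 / 2)" for x :: real
proof -
  have main: "exp y + exp (-y) \<le> 2 * exp (y\<^sup>2 / 2)" if "y \<ge> 0" for y :: real
  proof -
    have h: "-(2*y) * (1/2) + ln (1 + (1/2) * (exp (2*y) - 1)) \<le> (2*y)\<^sup>2 / 8"
      using Hoeffdings_lemma_aux[of "2*y" "1/2"] that by simp
    have e2: "exp (2*y) > 0" by simp
    have pos: "1 + (1/2) * (exp (2*y) - 1) > 0"
      by (simp add: field_simps add_pos_pos)
    have "ln (1 + (1/2) * (exp (2*y) - 1)) \<le> y + y\<^sup>2/2"
      using h by (simp add: power2_eq_square)
    hence "exp (ln (1 + (1/2) * (exp (2*y) - 1))) \<le> exp (y + y\<^sup>2/2)"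
      by simp
    hence le1: "1 + (1/2) * (exp (2*y) - 1) \<le> exp (y + y\<^sup>2/2)"
      using pos by simp
    have "(exp (2*y) + 1) / 2 = 1 + (1/2) * (exp (2*y) - 1)" by (simp add: field_simps)
    also have "\<dots> \<le> exp (y + y\<^sup>2/2)" by (rule le1)
    also have "\<dots> = exp y * exp (y\<^sup>2/2)" by (rule exp_add)
    finally have prev: "(exp (2*y) + 1) / 2 \<le> exp y * exp (y\<^sup>2/2)" .
    have A: "exp (-y) * exp (2*y) = exp y" by (simp flip: exp_add)
    have B: "exp (-y) * (exp y * exp (y\<^sup>2/2)) = exp (y\<^sup>2/2)"
      by (simp add: mult.assoc[symmetric] flip: exp_add)
    have "exp y + exp (-y) = 2 * (exp (-y) * ((exp (2*y) + 1)/2))"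
      using A by (simp add: algebra_simps)
    also have "\<dots> \<le> 2 * (exp (-y) * (exp y * exp (y\<^sup>2/2)))"
      using prev by (intro mult_left_mono) auto
    also have "\<dots> = 2 * exp (y\<^sup>2/2)" using B by simp
    finally show ?thesis .
  qed
  show ?thesis
  proof (cases "x \<ge> 0")
    case True then show ?thesis by (rule main)
  next
    case False
    then have "exp (-x) + exp (-(-x)) \<le> 2 * exp ((-x)\<^sup>2 / 2)"
      by (intro main) auto
    then show ?thesis by simp
  qed
qed

definition Rad :: "nat \<Rightarrow> (nat \<Rightarrow> real) set" where
  "Rad k = Pi\<^sub>E {..<k} (\<lambda>_. {-1::real, 1})"

lemma finite_Rad: "finite (Rad k)"
  unfolding Rad_def by (intro finite_PiE) auto

lemma card_Rad: "card (Rad k) = 2 ^ k"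
  unfolding Rad_def by (simp add: card_PiE numeral_2_eq_2)

lemma rad_mgf:
  "(\<Sum>\<epsilon>\<in>Rad k. exp (\<Sum>i<k. \<epsilon> i * v i)) \<le> 2 ^ k * exp ((\<Sum>i<k. (v i)\<^sup>2) / 2)"
proof -
  have "(\<Sum>\<epsilon>\<in>Rad k. exp (\<Sum>i<k. \<epsilon> i * v i)) = (\<Sum>\<epsilon>\<in>Rad k. \<Prod>i<k. exp (\<epsilon> i * v i))"
    by (simp add: exp_sum)
  also have "\<dots> = (\<Prod>i<k. \<Sum>e\<in>{-1::real,1}. exp (e * v i))"
    unfolding Rad_def by (subst prod_sum_PiE) auto
  also have "\<dots> = (\<Prod>i<k. exp (v i) + exp (- v i))"
    by (intro prod.cong) auto
  also have "\<dots> \<le> (\<Prod>i<k. 2 * exp ((v i)\<^sup>2 / 2))"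
    by (intro prod_mono) (auto intro: add_nonneg_nonneg cosh_bound)
  also have "\<dots> = 2 ^ k * exp ((\<Sum>i<k. (v i)\<^sup>2) / 2)"
    by (simp add: prod.distrib exp_sum sum_divide_distrib)
  finally show ?thesis .
qed

lemma massart_lambda:
  fixes V :: "(nat \<Rightarrow> real) set"
  assumes fin: "finite V" and ne: "V \<noteq> {}" and R: "\<And>v. v \<in> V \<Longrightarrow> (\<Sum>i<k. (v i)\<^sup>2) \<le> R\<^sup>2"
    and lam: "lam > 0"
  shows "(\<Sum>\<epsilon>\<in>Rad k. Max ((\<lambda>v. \<Sum>i<k. \<epsilon> i * v i) ` V)) / 2 ^ k
           \<le> ln (card V) / lam + lam * R\<^sup>2 / 2"
proof -
  define g where "g \<epsilon> = Max ((\<lambda>v. \<Sum>i<k. \<epsilon> i * v i) ` V)" for \<epsilon>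
  define a where "a = (\<Sum>\<epsilon>\<in>Rad k. g \<epsilon>) / 2 ^ k"
  have cE: "real (card (Rad k)) = 2 ^ k" by (simp add: card_Rad)
  have jen: "2 ^ k * exp (lam * a) \<le> (\<Sum>\<epsilon>\<in>Rad k. exp (lam * g \<epsilon>))"
  proof -
    have "(\<Sum>\<epsilon>\<in>Rad k. exp (lam * a) * (1 + lam * g \<epsilon> - lam * a)) \<le> (\<Sum>\<epsilon>\<in>Rad k. exp (lam * g \<epsilon>))"
    proof (intro sum_mono)
      fix \<epsilon>
      have "exp (lam * a) * (1 + (lam * g \<epsilon> - lam * a)) \<le> exp (lam * a) * exp (lam * g \<epsilon> - lam * a)"
        by (intro mult_left_mono exp_ge_add_one_self) auto
      also have "\<dots> = exp (lam * g \<epsilon>)" by (simp flip: exp_add)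
      finally show "exp (lam * a) * (1 + lam * g \<epsilon> - lam * a) \<le> exp (lam * g \<epsilon>)" by (simp add: add_diff_eq)
    qed
    moreover have "(\<Sum>\<epsilon>\<in>Rad k. exp (lam * a) * (1 + lam * g \<epsilon> - lam * a))
        = exp (lam * a) * (2 ^ k + lam * (\<Sum>\<epsilon>\<in>Rad k. g \<epsilon>) - 2^k * lam * a)"
      by (simp add: sum_distrib_left sum.distrib sum_subtractf cE flip: sum_distrib_left) 
    moreover have "lam * (\<Sum>\<epsilon>\<in>Rad k. g \<epsilon>) = 2^k * lam * a"
      unfolding a_def by simp
    ultimately show ?thesis by (simp add: mult.commute)
  qed
  have up: "exp (lam * g \<epsilon>) \<le> (\<Sum>v\<in>V. exp (\<Sum>i<k. \<epsilon> i * (lam * v i)))" for \<epsilon>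
  proof -
    have "g \<epsilon> \<in> (\<lambda>v. \<Sum>i<k. \<epsilon> i * v i) ` V"
      unfolding g_def using fin ne by (intro Max_in) auto
    then obtain v0 where v0: "v0 \<in> V" "g \<epsilon> = (\<Sum>i<k. \<epsilon> i * v0 i)"
      by auto
    have "exp (lam * g \<epsilon>) = exp (\<Sum>i<k. \<epsilon> i * (lam * v0 i))"
      by (simp add: v0 sum_distrib_left algebra_simps)
    also have "\<dots> \<le> (\<Sum>v\<in>V. exp (\<Sum>i<k. \<epsilon> i * (lam * v i)))"
      using v0(1) fin by (intro member_le_sum) auto
    finally show ?thesis .
  qed
  have "(\<Sum>\<epsilon>\<in>Rad k. exp (lam * g \<epsilon>)) \<le> (\<Sum>\<epsilon>\<in>Rad k. \<Sum>v\<in>V. exp (\<Sum>i<k. \<epsilon> i * (lam * v i)))"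
    by (intro sum_mono up)
  also have "\<dots> = (\<Sum>v\<in>V. \<Sum>\<epsilon>\<in>Rad k. exp (\<Sum>i<k. \<epsilon> i * (lam * v i)))"
    by (rule sum.swap)
  also have "\<dots> \<le> (\<Sum>v\<in>V. 2 ^ k * exp ((\<Sum>i<k. (lam * v i)\<^sup>2) / 2))"
    by (intro sum_mono rad_mgf)
  also have "\<dots> \<le> (\<Sum>v\<in>V. 2 ^ k * exp (lam\<^sup>2 * R\<^sup>2 / 2))"
  proof (intro sum_mono mult_left_mono)
    fix v assume "v \<in> V"
    have "(\<Sum>i<k. (lam * v i)\<^sup>2) = lam\<^sup>2 * (\<Sum>i<k. (v i)\<^sup>2)"
      by (simp add: power_mult_distrib sum_distrib_left)
    also have "\<dots> \<le> lam\<^sup>2 * R\<^sup>2" using R[OF \<open>v \<in> V\<close>] by (intro mult_left_mono) auto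
    finally show "exp ((\<Sum>i<k. (lam * v i)\<^sup>2) / 2) \<le> exp (lam\<^sup>2 * R\<^sup>2 / 2)" by simp
  qed auto
  also have "\<dots> = card V * 2 ^ k * exp (lam\<^sup>2 * R\<^sup>2 / 2)" by simp
  finally have "2 ^ k * exp (lam * a) \<le> card V * 2 ^ k * exp (lam\<^sup>2 * R\<^sup>2 / 2)"
    using jen by linarith
  hence "exp (lam * a) \<le> card V * exp (lam\<^sup>2 * R\<^sup>2 / 2)" by simp
  hence "lam * a \<le> ln (card V * exp (lam\<^sup>2 * R\<^sup>2 / 2))"
    using fin ne by (subst ln_ge_iff) (auto simp: card_gt_0_iff)
  also have "\<dots> = ln (card V) + lam\<^sup>2 * R\<^sup>2 / 2"
    using fin ne by (subst ln_mult) (auto simp: card_gt_0_iff)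
  finally have "lam * a \<le> ln (card V) + lam\<^sup>2 * R\<^sup>2 / 2" .
  hence "a \<le> (ln (card V) + lam\<^sup>2 * R\<^sup>2 / 2) / lam"
    using lam by (simp add: field_simps)
  also have "\<dots> = ln (card V) / lam + lam * R\<^sup>2 / 2"
    using lam by (simp add: field_simps power2_eq_square)
  finally show ?thesis unfolding a_def g_def .
qed

lemma massart:
  fixes V :: "(nat \<Rightarrow> real) set"
  assumes fin: "finite V" and ne: "V \<noteq> {}" and R: "\<And>v. v \<in> V \<Longrightarrow> (\<Sum>i<k. (v i)\<^sup>2) \<le> R\<^sup>2"
    and R0: "R \<ge> 0" and Lg: "ln (card V) \<le> Lg"
  shows "(\<Sum>\<epsilon>\<in>Rad k. Max ((\<lambda>v. \<Sum>i<k. \<epsilon> i * v i) ` V)) / 2 ^ k \<le> R * sqrt (2 * Lg)"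
proof -
  define a where "a = (\<Sum>\<epsilon>\<in>Rad k. Max ((\<lambda>v. \<Sum>i<k. \<epsilon> i * v i) ` V)) / 2 ^ k"
  have ge1: "card V \<ge> 1" using fin ne by (simp add: card_gt_0_iff Suc_le_eq)
  have L0: "Lg \<ge> 0" using Lg ge1 by (smt (verit) ln_ge_zero of_nat_1 of_nat_mono)
  have all: "a \<le> Lg / lam + lam * R\<^sup>2 / 2" if "lam > 0" for lam
  proof -
    have "ln (card V) / lam \<le> Lg / lam" using Lg that by (intro divide_right_mono) auto
    thus ?thesis using massart_lambda[OF fin ne R that] unfolding a_def by linarith
  qed
  show ?thesis
  proof (cases "R > 0 \<and> Lg > 0")
    case True
    define l where "l = sqrt (2 * Lg) / R"
    have l: "l > 0" using True by (simp add: l_def)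
    have "a \<le> Lg / l + l * R\<^sup>2 / 2" by (rule all[OF l])
    also have "Lg / l = R * sqrt (2*Lg) / 2"
    proof -
      have "sqrt (2*Lg) * sqrt (2*Lg) = 2 * Lg" using True by simp
      thus ?thesis using True by (simp add: l_def field_simps)
    qed
    also have "l * R\<^sup>2 / 2 = R * sqrt (2*Lg) / 2"
      using True by (simp add: l_def field_simps power2_eq_square)
    finally show ?thesis unfolding a_def by simp
  next
    case False
    have "a \<le> 0"
    proof (rule ccontr)
      assume "\<not> a \<le> 0"
      hence apos: "a > 0" by simp
      show False
      proof (cases "Lg = 0")
        case True
        define l where "l = a / (R\<^sup>2 + 1)"
        have Rp: "R\<^sup>2 + 1 > 0" by (simp add: add_nonneg_pos)
        have l: "l > 0" using apos Rp unfolding l_def by (rule divide_pos_pos)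
        have "a \<le> l * R\<^sup>2 / 2" using all[OF l] True by simp
        also have "l * R\<^sup>2 / 2 < a"
        proof -
          have "l * R\<^sup>2 < l * (R\<^sup>2 + 1)" using l by simp
          also have "\<dots> = a" using Rp by (simp add: l_def)
          finally have lt: "l * R\<^sup>2 < a" .
          have "0 \<le> l * R\<^sup>2" using l by simp
          thus ?thesis using lt by linarith
        qed
        finally show False by simp
      next
        case False
        hence "R = 0" using \<open>\<not> (R > 0 \<and> Lg > 0)\<close> L0 R0 by auto
        define l where "l = 2 * Lg / a"
        have Lp: "Lg > 0" using False L0 by simp
        have l: "l > 0" using apos Lp by (simp add: l_def)
        have "a \<le> Lg / l" using all[OF l] \<open>R = 0\<close> by simp
        also have "Lg / l = a / 2" using Lp apos by (simp add: l_def field_simps)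
        finally show False using apos by simp
      qed
    qed
    moreover have "R * sqrt (2 * Lg) \<ge> 0" using R0 L0 by simp
    ultimately show ?thesis unfolding a_def by linarith
  qed
qed


lemma idx_mem: "s \<in> idx_tuples n t \<Longrightarrow> j < t \<Longrightarrow> s j < n"
  by (auto simp: idx_tuples_def PiE_iff)

lemma finite_idx: "finite (idx_tuples n t)"
  by (simp add: idx_tuples_def finite_PiE)

lemma exists_le_avg:
  fixes f :: "'a \<Rightarrow> real" and b :: real
  assumes "finite S" "S \<noteq> {}" "(\<Sum>x\<in>S. f x) \<le> real (card S) * b"
  shows "\<exists>x\<in>S. f x \<le> b"
proof (rule ccontr)
  assume "\<not> ?thesis"
  hence "\<forall>x\<in>S. b < f x" by auto
  hence "(\<Sum>x\<in>S. b) < (\<Sum>x\<in>S. f x)" using assms by (intro sum_strict_mono) auto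
  thus False using assms by simp
qed

definition ev :: "nat \<Rightarrow> nat \<Rightarrow> nat \<Rightarrow> nat \<Rightarrow> real" where
  "ev j u = (\<lambda>i. if i = j then (\<lambda>m. if m = u then 1 else 0) else (\<lambda>_. 1))"

lemma plane_sum:
  assumes "a \<in> Pi_forms n t" "j < t" "u < n"
  shows "(\<Sum>s\<in>idx_tuples n t. \<bar>a s\<bar> * (if s j = u then 1 else 0)) \<le> 1"
proof -
  have ps: "plane_substochastic n t (\<lambda>s. \<bar>a s\<bar>)" using assms(1) by (simp add: Pi_forms_def)
  hence le: "form_eval n t (\<lambda>s. \<bar>a s\<bar>) (ev j u) \<le> 1"
    using assms(2,3) unfolding plane_substochastic_def ev_def by blast
  have pr: "(\<Prod>i<t. ev j u i (s i)) = (if s j = u then 1 else 0)" for s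
  proof -
    have "(\<Prod>i<t. ev j u i (s i)) = (\<Prod>i<t. if i = j then (if s j = u then 1 else 0) else 1)"
      by (intro prod.cong) (auto simp: ev_def)
    also have "\<dots> = (if s j = u then 1 else 0)" using assms(2) by simp
    finally show ?thesis .
  qed
  have "form_eval n t (\<lambda>s. \<bar>a s\<bar>) (ev j u) = (\<Sum>s\<in>idx_tuples n t. \<bar>a s\<bar> * (if s j = u then 1 else 0))"
    unfolding form_eval_def pr ..
  with le show ?thesis by simp
qed

lemma H_vals: "x \<in> H n d \<Longrightarrow> r < n \<Longrightarrow> x r \<in> {-1,0,1}"
  by (auto simp: H_def PiE_iff)

lemma H_card: "x \<in> H n d \<Longrightarrow> card {i\<in>{..<n}. x i \<noteq> 0} = min d n"
  by (simp add: H_def)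

lemma HT_mem: "X \<in> H_tuples n t d \<Longrightarrow> j < t \<Longrightarrow> X j \<in> H n (d j)"
  by (auto simp: H_tuples_def PiE_iff)

lemma abs_c_le:
  assumes X: "X \<in> H_tuples n t d" and s: "s \<in> idx_tuples n t" and p: "p < t"
  shows "\<bar>\<Prod>j<t. X j (s j)\<bar> \<le> (if X p (s p) \<noteq> 0 then 1 else 0)"
proof (cases "X p (s p) = 0")
  case True
  hence "(\<Prod>j<t. X j (s j)) = 0" using p by (intro prod_zero) auto
  thus ?thesis using True by simp
next
  case False
  have "\<bar>\<Prod>j<t. X j (s j)\<bar> = (\<Prod>j<t. \<bar>X j (s j)\<bar>)" by (simp add: abs_prod)
  also have "\<dots> \<le> 1"
  proof (rule prod_le_1)
    fix j assume "j \<in> {..<t}"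
    hence "X j (s j) \<in> {-1,0,1}" using H_vals[OF HT_mem[OF X] idx_mem[OF s]] by auto
    thus "0 \<le> \<bar>X j (s j)\<bar> \<and> \<bar>X j (s j)\<bar> \<le> 1" by auto
  qed
  finally show ?thesis using False by simp
qed

lemma abs_c_le1:
  assumes X: "X \<in> H_tuples n t d" and s: "s \<in> idx_tuples n t" and t: "t > 0"
  shows "\<bar>\<Prod>j<t. X j (s j)\<bar> \<le> 1"
proof -
  have "\<bar>\<Prod>j<t. X j (s j)\<bar> \<le> (if X 0 (s 0) \<noteq> 0 then 1 else 0)" by (rule abs_c_le[OF X s t])
  moreover have "(if X 0 (s 0) \<noteq> 0 then 1 else 0) \<le> (1::real)" by auto
  ultimately show ?thesis by linarith
qed

lemma sum_c_le:
  assumes a: "a \<in> Pi_forms n t" and X: "X \<in> H_tuples n t d" and p: "p < t" and dp: "d p \<le> n"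
  shows "(\<Sum>s\<in>idx_tuples n t. \<bar>a s * (\<Prod>j<t. X j (s j))\<bar>) \<le> d p"
proof -
  define S where "S = {u\<in>{..<n}. X p u \<noteq> 0}"
  have finS: "finite S" by (simp add: S_def)
  have cardS: "card S = d p" using H_card[OF HT_mem[OF X p]] dp by (simp add: S_def)
  have "(\<Sum>s\<in>idx_tuples n t. \<bar>a s * (\<Prod>j<t. X j (s j))\<bar>)
      \<le> (\<Sum>s\<in>idx_tuples n t. \<bar>a s\<bar> * (if X p (s p) \<noteq> 0 then 1 else 0))"
    by (intro sum_mono) (simp add: abs_mult mult_left_mono abs_c_le[OF X _ p])
  also have "\<dots> = (\<Sum>s\<in>idx_tuples n t. \<Sum>u\<in>S. \<bar>a s\<bar> * (if s p = u then 1 else 0))"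
  proof (intro sum.cong refl)
    fix s assume s: "s \<in> idx_tuples n t"
    have sp: "s p < n" using idx_mem[OF s p] .
    have "(\<Sum>u\<in>S. \<bar>a s\<bar> * (if s p = u then 1 else 0)) = (\<Sum>u\<in>S. if s p = u then \<bar>a s\<bar> else 0)"
      by (intro sum.cong) auto
    also have "\<dots> = (if s p \<in> S then \<bar>a s\<bar> else 0)"
      using finS by (simp add: sum.delta)
    finally show "\<bar>a s\<bar> * (if X p (s p) \<noteq> 0 then 1 else 0) = (\<Sum>u\<in>S. \<bar>a s\<bar> * (if s p = u then 1 else 0))"
      using sp by (simp add: S_def)
  qed
  also have "\<dots> = (\<Sum>u\<in>S. \<Sum>s\<in>idx_tuples n t. \<bar>a s\<bar> * (if s p = u then 1 else 0))"
    by (rule sum.swap)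
  also have "\<dots> \<le> (\<Sum>u\<in>S. 1)"
    by (intro sum_mono plane_sum[OF a p]) (simp add: S_def)
  also have "\<dots> = d p" using cardS by simp
  finally show ?thesis .
qed

lemma sum_c_le_min:
  assumes a: "a \<in> Pi_forms n t" and X: "X \<in> H_tuples n t d" and t: "t > 0"
    and d: "\<forall>s<t. d s \<in> {1..n}"
  shows "(\<Sum>s\<in>idx_tuples n t. \<bar>a s * (\<Prod>j<t. X j (s j))\<bar>) \<le> Min (d ` {..<t})"
proof -
  have "Min (d ` {..<t}) \<in> d ` {..<t}" using t by (intro Min_in) auto
  then obtain p where p: "p < t" "Min (d ` {..<t}) = d p" by auto
  show ?thesis using sum_c_le[OF a X p(1)] d p by auto
qed

definition Hs :: "nat \<Rightarrow> nat \<Rightarrow> (nat \<Rightarrow> nat) set" where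
  "Hs n M = Pi\<^sub>E {..<n} (\<lambda>_. {..<M})"
definition HH :: "nat \<Rightarrow> nat \<Rightarrow> nat \<Rightarrow> (nat \<Rightarrow> nat \<Rightarrow> nat) set" where
  "HH n t M = Pi\<^sub>E {..<t} (\<lambda>_. Hs n M)"
definition xi :: "(nat \<Rightarrow> nat) \<Rightarrow> nat \<Rightarrow> real" where
  "xi g r = (if g r = 0 then 1 else 0)"

lemma finite_Hs: "finite (Hs n M)" by (simp add: Hs_def finite_PiE)
lemma finite_HH: "finite (HH n t M)" by (simp add: HH_def finite_PiE finite_Hs)
lemma card_Hs: "card (Hs n M) = M ^ n" by (simp add: Hs_def card_PiE)
lemma card_HH: "card (HH n t M) = (M ^ n) ^ t" by (simp add: HH_def card_PiE finite_Hs card_Hs)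

lemma prod_if_except:
  assumes "finite A" "B \<subseteq> A"
  shows "(\<Prod>q\<in>A. if q \<in> B then 1 else (c::nat)) = c ^ (card A - card B)"
proof -
  have "(\<Prod>q\<in>A. if q \<in> B then 1 else c) = (\<Prod>q\<in>A - B. c)"
    using assms(1) by (simp add: prod.If_cases Diff_eq)
  also have "\<dots> = c ^ card (A - B)" by simp
  also have "card (A - B) = card A - card B"
    using assms by (intro card_Diff_subset) (auto intro: finite_subset)
  finally show ?thesis .
qed

lemma card_fix:
  assumes "B \<subseteq> {..<n}" "M > 0"
  shows "card {g\<in>Hs n M. \<forall>r\<in>B. g r = 0} = M ^ (n - card B)"
proof -
  have eq: "{g\<in>Hs n M. \<forall>r\<in>B. g r = 0} = Pi\<^sub>E {..<n} (\<lambda>q. if q \<in> B then {0} else {..<M})"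
    using assms by (auto simp: Hs_def PiE_iff extensional_def split: if_splits)
  have "card (Pi\<^sub>E {..<n} (\<lambda>q. if q \<in> B then {0} else {..<M})) = (\<Prod>q<n. if q \<in> B then 1 else M)"
    by (subst card_PiE) (auto intro!: prod.cong)
  also have "\<dots> = M ^ (n - card B)"
    using prod_if_except[of "{..<n}" B M] assms by simp
  finally show ?thesis using eq by simp
qed

lemma sum_ind_card:
  "finite A \<Longrightarrow> (\<Sum>x\<in>A. if P x then 1 else 0 :: real) = real (card {x\<in>A. P x})"
  by (simp add: sum.If_cases Int_def conj_commute)

lemma sum_xi:
  assumes "r < n" "M > 0"
  shows "real M * (\<Sum>g\<in>Hs n M. xi g r) = real M ^ n"
proof -
  have "(\<Sum>g\<in>Hs n M. xi g r) = real (card {g\<in>Hs n M. g r = 0})"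
    unfolding xi_def by (rule sum_ind_card[OF finite_Hs])
  also have "{g\<in>Hs n M. g r = 0} = {g\<in>Hs n M. \<forall>q\<in>{r}. g q = 0}" by auto
  also have "card \<dots> = M ^ (n - 1)" using card_fix[of "{r}" n M] assms by simp
  finally have "(\<Sum>g\<in>Hs n M. xi g r) = real M ^ (n - 1)" by simp
  moreover have "real M * real M ^ (n - 1) = real M ^ n"
    using assms(1) by (cases n) auto
  ultimately show ?thesis by simp
qed

lemma sum_xi2:
  assumes "r < n" "r' < n" "M > 0"
  shows "real M ^ 2 * (\<Sum>g\<in>Hs n M. xi g r * xi g r') = real M ^ n * (if r = r' then real M else 1)"
proof (cases "r = r'")
  case True
  have "(\<Sum>g\<in>Hs n M. xi g r * xi g r') = (\<Sum>g\<in>Hs n M. xi g r)"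
    using True by (intro sum.cong) (auto simp: xi_def)
  hence "real M ^ 2 * (\<Sum>g\<in>Hs n M. xi g r * xi g r') = real M * (real M * (\<Sum>g\<in>Hs n M. xi g r))"
    by (simp add: power2_eq_square)
  also have "\<dots> = real M * real M ^ n" using sum_xi[OF assms(1,3)] by simp
  finally show ?thesis using True by simp
next
  case False
  have "(\<Sum>g\<in>Hs n M. xi g r * xi g r') = real (card {g\<in>Hs n M. g r = 0 \<and> g r' = 0})"
  proof -
    have "(\<Sum>g\<in>Hs n M. xi g r * xi g r') = (\<Sum>g\<in>Hs n M. if g r = 0 \<and> g r' = 0 then 1 else 0)"
      by (intro sum.cong) (auto simp: xi_def)
    thus ?thesis by (simp add: sum_ind_card[OF finite_Hs])
  qed
  also have "{g\<in>Hs n M. g r = 0 \<and> g r' = 0} = {g\<in>Hs n M. \<forall>q\<in>{r,r'}. g q = 0}" by auto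
  also have "card \<dots> = M ^ (n - 2)" using card_fix[of "{r,r'}" n M] assms False by (simp add: numeral_2_eq_2)
  finally have s: "(\<Sum>g\<in>Hs n M. xi g r * xi g r') = real M ^ (n - 2)" by simp
  have n2: "n \<ge> 2" using assms False by linarith
  have "real M ^ 2 * real M ^ (n - 2) = real M ^ (2 + (n - 2))"
    by (rule power_add[symmetric])
  also have "2 + (n - 2) = n" using n2 by simp
  finally have "real M ^ 2 * real M ^ (n - 2) = real M ^ n" .
  thus ?thesis using s False by simp
qed

lemma sum_HH_prod:
  "(\<Sum>h\<in>HH n t M. \<Prod>j<t. f j (h j)) = (\<Prod>j<t. \<Sum>g\<in>Hs n M. (f j g :: real))"
  unfolding HH_def by (subst prod_sum_PiE) (auto simp: finite_Hs)

definition W :: "nat \<Rightarrow> nat \<Rightarrow> (nat \<Rightarrow> nat \<Rightarrow> nat) \<Rightarrow> (nat \<Rightarrow> nat) \<Rightarrow> real" where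
  "W t M h s = (\<Prod>j<t. real M * xi (h j) (s j))"

definition PP :: "nat \<Rightarrow> nat \<Rightarrow> (nat \<Rightarrow> nat) \<Rightarrow> (nat \<Rightarrow> nat) \<Rightarrow> real" where
  "PP t M s s' = (\<Prod>j<t. if s j = s' j then real M else 1)"

lemma sum_W:
  assumes "s \<in> idx_tuples n t" "M > 0"
  shows "(\<Sum>h\<in>HH n t M. W t M h s) = (real M ^ n) ^ t"
proof -
  have "(\<Sum>h\<in>HH n t M. W t M h s) = (\<Prod>j<t. \<Sum>g\<in>Hs n M. real M * xi g (s j))"
    unfolding W_def by (rule sum_HH_prod)
  also have "\<dots> = (\<Prod>j<t. real M ^ n)"
    by (intro prod.cong refl) (simp add: sum_distrib_left[symmetric] sum_xi idx_mem[OF assms(1)] assms(2))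
  finally show ?thesis by simp
qed

lemma sum_WW:
  assumes "s \<in> idx_tuples n t" "s' \<in> idx_tuples n t" "M > 0"
  shows "(\<Sum>h\<in>HH n t M. W t M h s * W t M h s') = (real M ^ n) ^ t * PP t M s s'"
proof -
  have "(\<Sum>h\<in>HH n t M. W t M h s * W t M h s')
      = (\<Sum>h\<in>HH n t M. \<Prod>j<t. real M ^ 2 * (xi (h j) (s j) * xi (h j) (s' j)))"
    unfolding W_def by (intro sum.cong refl) (simp add: prod.distrib[symmetric] power2_eq_square algebra_simps)
  also have "\<dots> = (\<Prod>j<t. \<Sum>g\<in>Hs n M. real M ^ 2 * (xi g (s j) * xi g (s' j)))"
    by (rule sum_HH_prod)
  also have "\<dots> = (\<Prod>j<t. real M ^ n * (if s j = s' j then real M else 1))"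
    by (intro prod.cong refl)
       (simp add: sum_distrib_left[symmetric] sum_xi2 idx_mem[OF assms(1)] idx_mem[OF assms(2)] assms(3))
  also have "\<dots> = (real M ^ n) ^ t * PP t M s s'"
    by (simp add: PP_def prod.distrib)
  finally show ?thesis .
qed

lemma PP_bounds:
  assumes "M \<ge> 1"
  shows "0 \<le> PP t M s s' - 1" "PP t M s s' - 1 \<le> real M ^ t * (\<Sum>j<t. if s j = s' j then 1 else 0)"
proof -
  have ge: "1 \<le> PP t M s s'" unfolding PP_def using assms by (intro prod_ge_1) auto
  thus "0 \<le> PP t M s s' - 1" by simp
  show "PP t M s s' - 1 \<le> real M ^ t * (\<Sum>j<t. if s j = s' j then 1 else 0)"
  proof (cases "\<exists>j<t. s j = s' j")
    case True
    then obtain j where j: "j < t" "s j = s' j" by auto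
    have "PP t M s s' \<le> (\<Prod>j<t. real M)"
      unfolding PP_def using assms by (intro prod_mono) auto
    hence "PP t M s s' - 1 \<le> real M ^ t" by simp
    also have "\<dots> \<le> real M ^ t * (\<Sum>j<t. if s j = s' j then 1 else 0)"
    proof -
      have "(1::real) \<le> (\<Sum>j<t. if s j = s' j then 1 else 0)"
        using j by (intro member_le_sum[where i=j, THEN order.trans[rotated]]) auto
      hence "real M ^ t * 1 \<le> real M ^ t * (\<Sum>j<t. if s j = s' j then 1 else 0)"
        by (intro mult_left_mono) auto
      thus ?thesis by simp
    qed
    finally show ?thesis .
  next
    case False
    hence "PP t M s s' = 1" unfolding PP_def by (intro prod.neutral) auto
    thus ?thesis by (auto intro!: mult_nonneg_nonneg sum_nonneg)
  qed
qed

definition samp :: "nat \<Rightarrow> nat \<Rightarrow> nat \<Rightarrow> (nat \<Rightarrow> nat \<Rightarrow> real) \<Rightarrow> (nat \<Rightarrow> nat \<Rightarrow> nat) \<Rightarrow> nat \<Rightarrow> nat \<Rightarrow> real" where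
  "samp n t M X h = (\<lambda>j. if j < t then (\<lambda>r. if r < n \<and> h j r = 0 then real M * X j r else 0) else (\<lambda>_. 0))"

lemma fe_samp:
  "form_eval n t a (samp n t M X h) = (\<Sum>s\<in>idx_tuples n t. a s * (\<Prod>j<t. X j (s j)) * W t M h s)"
  unfolding form_eval_def W_def
proof (intro sum.cong refl)
  fix s assume s: "s \<in> idx_tuples n t"
  have "(\<Prod>j<t. samp n t M X h j (s j)) = (\<Prod>j<t. X j (s j) * (real M * xi (h j) (s j)))"
    by (intro prod.cong refl) (auto simp: samp_def xi_def idx_mem[OF s])
  thus "a s * (\<Prod>j<t. samp n t M X h j (s j)) = a s * (\<Prod>j<t. X j (s j)) * (\<Prod>j<t. real M * xi (h j) (s j))"
    by (simp add: prod.distrib)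
qed


lemma var_one:
  assumes a: "a \<in> Pi_forms n t" and X: "X \<in> H_tuples n t d" and d: "\<forall>s<t. d s \<in> {1..n}"
    and M: "M \<ge> 1" and t: "t > 0"
  shows "(\<Sum>h\<in>HH n t M. (form_eval n t a (samp n t M X h) - form_eval n t a X)\<^sup>2)
     \<le> (real M ^ n) ^ t * (real M ^ t * real t * real (Min (d ` {..<t})))"
proof -
  define I where "I = idx_tuples n t"
  define c where "c s = a s * (\<Prod>j<t. X j (s j))" for s
  define N where "N = (real M ^ n) ^ t"
  define Q where "Q s s' = PP t M s s'" for s s'
  define HS where "HS = HH n t M"
  have finI: "finite I" by (simp add: I_def finite_idx)
  have finH: "finite HS" by (simp add: HS_def finite_HH)
  have M0: "M > 0" using M by simp
  have N0: "N \<ge> 0" by (simp add: N_def)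
  have fX: "form_eval n t a X = (\<Sum>s\<in>I. c s)" by (simp add: form_eval_def I_def c_def)
  have fS: "form_eval n t a (samp n t M X h) = (\<Sum>s\<in>I. c s * W t M h s)" for h
    by (simp add: fe_samp I_def c_def)
  have diff: "form_eval n t a (samp n t M X h) - form_eval n t a X = (\<Sum>s\<in>I. c s * (W t M h s - 1))" for h
    by (simp add: fS fX sum_subtractf[symmetric] algebra_simps)
  have sq: "(\<Sum>s\<in>I. c s * (W t M h s - 1))\<^sup>2
      = (\<Sum>s\<in>I. \<Sum>s'\<in>I. c s * c s' * ((W t M h s - 1) * (W t M h s' - 1)))" for h
    by (simp add: power2_eq_square sum_product algebra_simps)
  have inner: "(\<Sum>h\<in>HS. (W t M h s - 1) * (W t M h s' - 1)) = N * (Q s s' - 1)"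
    if "s \<in> I" "s' \<in> I" for s s'
  proof -
    have "(\<Sum>h\<in>HS. (W t M h s - 1) * (W t M h s' - 1))
       = (\<Sum>h\<in>HS. W t M h s * W t M h s') - (\<Sum>h\<in>HS. W t M h s) - (\<Sum>h\<in>HS. W t M h s') + (\<Sum>h\<in>HS. 1)"
      by (simp add: algebra_simps sum.distrib sum_subtractf)
    also have "\<dots> = N * Q s s' - N - N + N"
      using that M0 by (simp add: sum_WW sum_W N_def I_def card_HH HS_def Q_def)
    finally show ?thesis by (simp add: algebra_simps)
  qed
  have "(\<Sum>h\<in>HS. (form_eval n t a (samp n t M X h) - form_eval n t a X)\<^sup>2)
      = (\<Sum>h\<in>HS. \<Sum>s\<in>I. \<Sum>s'\<in>I. c s * c s' * ((W t M h s - 1) * (W t M h s' - 1)))"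
    by (simp add: diff sq)
  also have "\<dots> = (\<Sum>s\<in>I. \<Sum>h\<in>HS. \<Sum>s'\<in>I. c s * c s' * ((W t M h s - 1) * (W t M h s' - 1)))"
    by (rule sum.swap)
  also have "\<dots> = (\<Sum>s\<in>I. \<Sum>s'\<in>I. \<Sum>h\<in>HS. c s * c s' * ((W t M h s - 1) * (W t M h s' - 1)))"
    by (intro sum.cong refl sum.swap)
  also have "\<dots> = (\<Sum>s\<in>I. \<Sum>s'\<in>I. c s * c s' * (N * (Q s s' - 1)))"
    by (intro sum.cong refl) (simp add: sum_distrib_left[symmetric] inner)
  also have "\<dots> \<le> (\<Sum>s\<in>I. \<Sum>s'\<in>I. N * real M ^ t * (\<Sum>j<t. \<bar>c s\<bar> * (\<bar>c s'\<bar> * (if s' j = s j then 1 else 0))))"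
  proof (intro sum_mono)
    fix s s'
    have q0: "0 \<le> Q s s' - 1" and q1: "Q s s' - 1 \<le> real M ^ t * (\<Sum>j<t. if s j = s' j then 1 else 0)"
      using PP_bounds[OF M] by (auto simp: Q_def)
    have "c s * c s' * (N * (Q s s' - 1)) \<le> \<bar>c s\<bar> * \<bar>c s'\<bar> * (N * (Q s s' - 1))"
      using q0 N0 by (intro mult_right_mono) (auto simp flip: abs_mult)
    also have "\<dots> \<le> \<bar>c s\<bar> * \<bar>c s'\<bar> * (N * (real M ^ t * (\<Sum>j<t. if s j = s' j then 1 else 0)))"
      using q1 N0 by (intro mult_left_mono) auto
    also have "\<dots> = N * real M ^ t * (\<Sum>j<t. \<bar>c s\<bar> * (\<bar>c s'\<bar> * (if s' j = s j then 1 else 0)))"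
      by (simp add: sum_distrib_left eq_commute[of "s j" "s' j" for j] algebra_simps)
    finally show "c s * c s' * (N * (Q s s' - 1))
        \<le> N * real M ^ t * (\<Sum>j<t. \<bar>c s\<bar> * (\<bar>c s'\<bar> * (if s' j = s j then 1 else 0)))" .
  qed
  also have "\<dots> = N * real M ^ t * (\<Sum>s\<in>I. \<Sum>s'\<in>I. \<Sum>j<t. \<bar>c s\<bar> * (\<bar>c s'\<bar> * (if s' j = s j then 1 else 0)))"
    by (simp add: sum_distrib_left)
  also have "(\<Sum>s\<in>I. \<Sum>s'\<in>I. \<Sum>j<t. \<bar>c s\<bar> * (\<bar>c s'\<bar> * (if s' j = s j then 1 else 0)))
      = (\<Sum>s\<in>I. \<Sum>j<t. \<bar>c s\<bar> * (\<Sum>s'\<in>I. \<bar>c s'\<bar> * (if s' j = s j then 1 else 0)))"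
    by (intro sum.cong refl) (simp add: sum.swap[of _ I] sum_distrib_left)
  also have "\<dots> \<le> (\<Sum>s\<in>I. \<Sum>j<t. \<bar>c s\<bar> * 1)"
  proof (intro sum_mono mult_left_mono)
    fix s j assume s: "s \<in> I" and j: "j \<in> {..<t}"
    have "(\<Sum>s'\<in>I. \<bar>c s'\<bar> * (if s' j = s j then 1 else 0)) \<le> (\<Sum>s'\<in>I. \<bar>a s'\<bar> * (if s' j = s j then 1 else 0))"
    proof (intro sum_mono)
      fix s' assume s': "s' \<in> I"
      have "\<bar>c s'\<bar> \<le> \<bar>a s'\<bar>"
        using abs_c_le1[OF X _ t, of s'] s' by (simp add: c_def I_def abs_mult mult_left_le)
      thus "\<bar>c s'\<bar> * (if s' j = s j then 1 else 0) \<le> \<bar>a s'\<bar> * (if s' j = s j then 1 else 0)" by simp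
    qed
    also have "\<dots> \<le> 1"
      using plane_sum[OF a, of j "s j"] j idx_mem[of s n t j] s by (simp add: I_def)
    finally show "(\<Sum>s'\<in>I. \<bar>c s'\<bar> * (if s' j = s j then 1 else 0)) \<le> 1" .
  qed auto
  also have "\<dots> = real t * (\<Sum>s\<in>I. \<bar>c s\<bar>)"
    by (simp add: sum_distrib_left)
  also have "\<dots> \<le> real t * real (Min (d ` {..<t}))"
    using sum_c_le_min[OF a X t d] by (intro mult_left_mono) (auto simp: c_def I_def)
  finally have fin: "(\<Sum>h\<in>HS. (form_eval n t a (samp n t M X h) - form_eval n t a X)\<^sup>2)
      \<le> N * real M ^ t * (real t * real (Min (d ` {..<t})))"
    by (simp add: mult_left_mono N0)
  thus ?thesis by (simp add: HS_def N_def algebra_simps)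
qed

lemma supp_samp:
  assumes j: "j < t" and M: "M > 0"
  shows "real (card {r. samp n t M X h j r \<noteq> 0}) = (\<Sum>r\<in>{u\<in>{..<n}. X j u \<noteq> 0}. xi (h j) r)"
proof -
  have "{r. samp n t M X h j r \<noteq> 0} = {r\<in>{u\<in>{..<n}. X j u \<noteq> 0}. h j r = 0}"
    using j M by (auto simp: samp_def)
  moreover have "(\<Sum>r\<in>{u\<in>{..<n}. X j u \<noteq> 0}. xi (h j) r) = real (card {r\<in>{u\<in>{..<n}. X j u \<noteq> 0}. h j r = 0})"
    unfolding xi_def by (rule sum_ind_card) simp
  ultimately show ?thesis by simp
qed

lemma sum_HH_xi:
  assumes j: "j < t" and r: "r < n" and M: "M > 0"
  shows "real M * (\<Sum>h\<in>HH n t M. xi (h j) r) = (real M ^ n) ^ t"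
proof -
  have "(\<Sum>h\<in>HH n t M. xi (h j) r) = (\<Sum>h\<in>HH n t M. \<Prod>j'<t. (if j' = j then xi (h j') r else 1))"
    using j by (intro sum.cong refl) simp
  also have "\<dots> = (\<Prod>j'<t. \<Sum>g\<in>Hs n M. (if j' = j then xi g r else 1))" by (rule sum_HH_prod)
  also have "\<dots> = (\<Prod>j'<t. if j' = j then (\<Sum>g\<in>Hs n M. xi g r) else real M ^ n)"
    by (intro prod.cong refl) (auto simp: card_Hs)
  also have "\<dots> = (\<Sum>g\<in>Hs n M. xi g r) * (\<Prod>j'\<in>{..<t} - {j}. if j' = j then (\<Sum>g\<in>Hs n M. xi g r) else real M ^ n)"
    using j by (subst prod.remove[of _ j]) auto
  also have "(\<Prod>j'\<in>{..<t} - {j}. if j' = j then (\<Sum>g\<in>Hs n M. xi g r) else real M ^ n) = (\<Prod>j'\<in>{..<t} - {j}. real M ^ n)"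
    by (intro prod.cong) auto
  also have "\<dots> = (real M ^ n) ^ (t - 1)" using j by simp
  finally have "real M * (\<Sum>h\<in>HH n t M. xi (h j) r) = (real M * (\<Sum>g\<in>Hs n M. xi g r)) * (real M ^ n) ^ (t - 1)"
    by simp
  also have "\<dots> = real M ^ n * (real M ^ n) ^ (t - 1)" using sum_xi[OF r M] by simp
  also have "\<dots> = (real M ^ n) ^ t" using j by (cases t) auto
  finally show ?thesis .
qed

lemma sampling:
  assumes t: "t > 0" and k: "k > 0" and M: "M \<ge> 1"
    and A: "\<forall>i<k. A i \<in> Pi_forms n t" and d: "\<forall>s<t. d s \<in> {1..n}" and X: "X \<in> H_tuples n t d"
  shows "\<exists>h\<in>HH n t M. (\<Sum>i<k. (form_eval n t (A i) (samp n t M X h) - form_eval n t (A i) X)\<^sup>2)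
            \<le> (1 + real t) * (real k * real M ^ t * real t * real (Min (d ` {..<t})))
         \<and> (\<forall>j<t. real (card {r. samp n t M X h j r \<noteq> 0}) * real M \<le> (1 + real t) * real (d j))"
proof -
  define m where "m = real (Min (d ` {..<t}))"
  define B where "B = real k * real M ^ t * real t * m"
  define N where "N = (real M ^ n) ^ t"
  define HS where "HS = HH n t M"
  define err where "err h = (\<Sum>i<k. (form_eval n t (A i) (samp n t M X h) - form_eval n t (A i) X)\<^sup>2)" for h
  define cj where "cj h j = real (card {r. samp n t M X h j r \<noteq> 0})" for h j
  define F where "F h = err h / B + (\<Sum>j<t. cj h j * real M / real (d j))" for h
  have M0: "M > 0" using M by simp
  have finH: "finite HS" by (simp add: HS_def finite_HH)
  have cardH: "real (card HS) = N" by (simp add: HS_def card_HH N_def)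
  have Npos: "N > 0" using M0 by (simp add: N_def)
  have "Min (d ` {..<t}) \<in> d ` {..<t}" using t by (intro Min_in) auto
  hence m1: "m \<ge> 1" using d by (auto simp: m_def)
  have Bpos: "B > 0" using k t M0 m1 by (simp add: B_def)
  have errsum: "(\<Sum>h\<in>HS. err h) \<le> N * B"
  proof -
    have "(\<Sum>h\<in>HS. err h) = (\<Sum>i<k. \<Sum>h\<in>HS. (form_eval n t (A i) (samp n t M X h) - form_eval n t (A i) X)\<^sup>2)"
      unfolding err_def by (rule sum.swap)
    also have "\<dots> \<le> (\<Sum>i<k. N * (real M ^ t * real t * m))"
      using var_one[OF _ X d M t] A by (intro sum_mono) (auto simp: HS_def N_def m_def)
    also have "\<dots> = N * B" by (simp add: B_def)
    finally show ?thesis .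
  qed
  have cjsum: "(\<Sum>h\<in>HS. cj h j * real M) = N * real (d j)" if j: "j < t" for j
  proof -
    define S where "S = {u\<in>{..<n}. X j u \<noteq> 0}"
    have cS: "card S = d j" using H_card[OF HT_mem[OF X j]] d j by (auto simp: S_def)
    have "(\<Sum>h\<in>HS. cj h j * real M) = (\<Sum>h\<in>HS. \<Sum>r\<in>S. real M * xi (h j) r)"
      unfolding cj_def using supp_samp[OF j M0] by (simp add: S_def sum_distrib_left mult.commute)
    also have "\<dots> = (\<Sum>r\<in>S. real M * (\<Sum>h\<in>HS. xi (h j) r))"
      by (subst sum.swap) (simp add: sum_distrib_left)
    also have "\<dots> = (\<Sum>r\<in>S. N)"
      by (intro sum.cong refl) (auto simp: S_def HS_def N_def sum_HH_xi[OF j _ M0])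
    also have "\<dots> = N * real (d j)" using cS by simp
    finally show ?thesis .
  qed
  have "(\<Sum>h\<in>HS. F h) = (\<Sum>h\<in>HS. err h) / B + (\<Sum>j<t. (\<Sum>h\<in>HS. cj h j * real M) / real (d j))"
    unfolding F_def by (simp add: sum.distrib sum_divide_distrib[symmetric]) (subst sum.swap, simp add: sum_divide_distrib)
  also have "\<dots> \<le> N + (\<Sum>j<t. N)"
  proof (rule add_mono)
    show "(\<Sum>h\<in>HS. err h) / B \<le> N" using errsum Bpos by (simp add: divide_le_eq mult.commute)
    show "(\<Sum>j<t. (\<Sum>h\<in>HS. cj h j * real M) / real (d j)) \<le> (\<Sum>j<t. N)"
    proof (intro sum_mono)
      fix j assume "j \<in> {..<t}"
      hence j: "j < t" by simp
      have "d j \<ge> 1" using d j by auto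
      thus "(\<Sum>h\<in>HS. cj h j * real M) / real (d j) \<le> N" using cjsum[OF j] by simp
    qed
  qed
  also have "\<dots> = real (card HS) * (1 + real t)" using cardH by (simp add: algebra_simps)
  finally have "(\<Sum>h\<in>HS. F h) \<le> real (card HS) * (1 + real t)" .
  moreover have "HS \<noteq> {}" using finH cardH Npos by auto
  ultimately obtain h where h: "h \<in> HS" "F h \<le> 1 + real t"
    using exists_le_avg[OF finH] by blast
  have nn: "0 \<le> cj h j * real M / real (d j)" for j by (simp add: cj_def)
  have err0: "0 \<le> err h" by (simp add: err_def sum_nonneg)
  have "err h / B \<le> F h"
    unfolding F_def using nn by (simp add: sum_nonneg)
  hence "err h \<le> B * F h" using Bpos by (simp add: divide_le_eq mult.commute)
  also have "\<dots> \<le> B * (1 + real t)" using h(2) Bpos by (intro mult_left_mono) auto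
  finally have e: "err h \<le> (1 + real t) * B" by (simp add: mult.commute)
  have cjb: "cj h j * real M \<le> (1 + real t) * real (d j)" if j: "j < t" for j
  proof -
    have "cj h j * real M / real (d j) \<le> (\<Sum>j<t. cj h j * real M / real (d j))"
      using j nn by (intro member_le_sum) auto
    also have "\<dots> \<le> F h" unfolding F_def using err0 Bpos by simp
    finally have "cj h j * real M / real (d j) \<le> 1 + real t" using h(2) by simp
    moreover have "d j \<ge> 1" using d j by auto
    ultimately show ?thesis by (simp add: divide_le_eq)
  qed
  show ?thesis
    using h(1) e cjb unfolding HS_def err_def cj_def B_def m_def by blast
qed


definition Sp :: "nat \<Rightarrow> nat \<Rightarrow> real \<Rightarrow> (nat \<Rightarrow> real) set" where
  "Sp n K \<beta> = {y. (\<forall>r. r \<ge> n \<longrightarrow> y r = 0) \<and> (\<forall>r. y r \<in> {-\<beta>, 0, \<beta>}) \<and> card {r. y r \<noteq> 0} \<le> K}"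

definition enc :: "nat \<Rightarrow> (nat \<Rightarrow> nat \<times> real) \<Rightarrow> nat \<Rightarrow> real" where
  "enc K g = (\<lambda>r. \<Sum>q<K. if fst (g q) = r then snd (g q) else 0)"

lemma Sp_sub:
  assumes n: "n \<ge> 1"
  shows "Sp n K \<beta> \<subseteq> enc K ` Pi\<^sub>E {..<K} (\<lambda>_. {..<n} \<times> {-\<beta>, 0, \<beta>})"
proof
  fix y assume y: "y \<in> Sp n K \<beta>"
  define S where "S = {r. y r \<noteq> 0}"
  have Ssub: "S \<subseteq> {..<n}"
  proof
    fix r assume "r \<in> S"
    hence "y r \<noteq> 0" by (simp add: S_def)
    thus "r \<in> {..<n}" using y unfolding Sp_def by (metis (mono_tags) lessThan_iff mem_Collect_eq not_le)
  qed
  hence finS: "finite S" by (rule finite_subset) simp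
  have cS: "card S \<le> K" using y by (simp add: Sp_def S_def)
  obtain b where b: "bij_betw b {0..<card S} S" using ex_bij_betw_nat_finite[OF finS] by blast
  define g where "g = (\<lambda>q. if q < K then (if q < card S then (b q, y (b q)) else (0, 0)) else undefined)"
  have "g \<in> Pi\<^sub>E {..<K} (\<lambda>_. {..<n} \<times> {-\<beta>, 0, \<beta>})"
  proof -
    have "b q \<in> S" if "q < card S" for q using b that by (auto simp: bij_betw_def)
    hence "b q < n" if "q < card S" for q using Ssub that by auto
    thus ?thesis using Ssub y n by (auto simp: g_def PiE_def extensional_def Sp_def)
  qed
  moreover have "enc K g = y"
  proof
    fix r
    have "enc K g r = (\<Sum>q<K. if q < card S then (if b q = r then y (b q) else 0) else 0)"
      unfolding enc_def by (intro sum.cong refl) (auto simp: g_def)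
    also have "\<dots> = (\<Sum>q\<in>{..<K} \<inter> {q. q < card S}. if b q = r then y (b q) else 0)"
      by (simp add: sum.If_cases)
    also have "{..<K} \<inter> {q. q < card S} = {0..<card S}" using cS by auto
    also have "(\<Sum>q\<in>{0..<card S}. if b q = r then y (b q) else 0) = (\<Sum>x\<in>S. if x = r then y x else 0)"
      using b by (rule sum.reindex_bij_betw)
    also have "\<dots> = (if r \<in> S then y r else 0)" using finS by simp
    also have "\<dots> = y r" by (simp add: S_def)
    finally show "enc K g r = y r" .
  qed
  ultimately show "y \<in> enc K ` Pi\<^sub>E {..<K} (\<lambda>_. {..<n} \<times> {-\<beta>, 0, \<beta>})" by blast
qed

lemma card_Sp:
  assumes n: "n \<ge> 1"
  shows "finite (Sp n K \<beta>) \<and> card (Sp n K \<beta>) \<le> (3 * n) ^ K"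
proof -
  define G where "G = Pi\<^sub>E {..<K} (\<lambda>_. {..<n} \<times> {-\<beta>, 0, \<beta>})"
  have finG: "finite G" by (simp add: G_def finite_PiE)
  have "card G = (card ({..<n} \<times> {-\<beta>, 0, \<beta>})) ^ K" by (simp add: G_def card_PiE)
  also have "card ({..<n} \<times> {-\<beta>, 0, \<beta>}) \<le> n * 3"
    by (simp add: card_cartesian_product card_insert_le_m1)
  hence "(card ({..<n} \<times> {-\<beta>, 0, \<beta>})) ^ K \<le> (3 * n) ^ K"
    by (intro power_mono) (auto simp: mult.commute)
  finally have cG: "card G \<le> (3*n)^K" by simp
  have sub: "Sp n K \<beta> \<subseteq> enc K ` G" using Sp_sub[OF n] by (simp add: G_def)
  have fin: "finite (Sp n K \<beta>)" using sub finG by (rule finite_subset[OF _ finite_imageI])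
  have "card (Sp n K \<beta>) \<le> card (enc K ` G)" using sub finG by (intro card_mono) auto
  also have "\<dots> \<le> card G" using finG by (rule card_image_le)
  finally show ?thesis using fin cG by simp
qed

definition Fam :: "nat \<Rightarrow> nat \<Rightarrow> nat \<Rightarrow> real \<Rightarrow> (nat \<Rightarrow> nat \<Rightarrow> real) set" where
  "Fam n t K \<beta> = {Y. (\<forall>j. j \<ge> t \<longrightarrow> Y j = (\<lambda>_. 0)) \<and> (\<forall>j<t. Y j \<in> Sp n K \<beta>)}"

lemma card_Fam:
  assumes n: "n \<ge> 1"
  shows "finite (Fam n t K \<beta>) \<and> card (Fam n t K \<beta>) \<le> (3 * n) ^ (t * K)"
proof -
  define P where "P = Pi\<^sub>E {..<t} (\<lambda>_. Sp n K \<beta>)"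
  define f where "f = (\<lambda>Z :: nat \<Rightarrow> nat \<Rightarrow> real. \<lambda>j. if j < t then Z j else (\<lambda>_. 0))"
  have finP: "finite P" using card_Sp[OF n] by (simp add: P_def finite_PiE)
  have cP: "card P \<le> (3 * n) ^ (t * K)"
  proof -
    have "card P = card (Sp n K \<beta>) ^ t" by (simp add: P_def card_PiE)
    also have "\<dots> \<le> ((3*n)^K) ^ t" using card_Sp[OF n] by (intro power_mono) auto
    also have "\<dots> = (3 * n) ^ (t * K)" by (simp add: power_mult mult.commute)
    finally show ?thesis .
  qed
  have sub: "Fam n t K \<beta> \<subseteq> f ` P"
  proof
    fix Y assume Y: "Y \<in> Fam n t K \<beta>"
    have "restrict Y {..<t} \<in> P" using Y by (auto simp: P_def Fam_def)
    moreover have "f (restrict Y {..<t}) = Y" using Y by (auto simp: f_def Fam_def)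
    ultimately show "Y \<in> f ` P" by (metis image_eqI)
  qed
  have fin: "finite (Fam n t K \<beta>)" using sub finP by (rule finite_subset[OF _ finite_imageI])
  have "card (Fam n t K \<beta>) \<le> card (f ` P)" using sub finP by (intro card_mono) auto
  also have "\<dots> \<le> card P" using finP by (rule card_image_le)
  finally show ?thesis using fin cP by simp
qed

lemma samp_Fam:
  assumes X: "X \<in> H_tuples n t d" and K: "\<forall>j<t. card {r. samp n t M X h j r \<noteq> 0} \<le> K"
  shows "samp n t M X h \<in> Fam n t K (real M)"
proof -
  have "samp n t M X h j \<in> Sp n K (real M)" if j: "j < t" for j
  proof -
    have "samp n t M X h j r \<in> {- real M, 0, real M}" for r
    proof (cases "r < n \<and> h j r = 0")
      case True
      hence "X j r \<in> {-1,0,1}" using H_vals[OF HT_mem[OF X j]] by auto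
      thus ?thesis using True j by (auto simp: samp_def)
    next
      case False
      thus ?thesis using j by (auto simp: samp_def)
    qed
    thus ?thesis using K j by (auto simp: Sp_def samp_def)
  qed
  thus ?thesis by (auto simp: Fam_def samp_def)
qed

lemma fe_cong:
  assumes "\<forall>j<t. \<forall>r<n. Y j r = Z j r"
  shows "form_eval n t a Y = form_eval n t a Z"
  unfolding form_eval_def
  by (intro sum.cong refl arg_cong[where f="\<lambda>x. a _ * x"] prod.cong) (use assms idx_mem in blast)+

lemma samp1_eq:
  "form_eval n t a (samp n t 1 X (\<lambda>_ _. 0)) = form_eval n t a X"
  by (rule fe_cong) (simp add: samp_def)

lemma supp_samp1:
  assumes X: "X \<in> H_tuples n t d" and j: "j < t" and dj: "d j \<le> n"
  shows "card {r. samp n t 1 X (\<lambda>_ _. 0) j r \<noteq> 0} = d j"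
proof -
  have "{r. samp n t 1 X (\<lambda>_ _. 0) j r \<noteq> 0} = {i\<in>{..<n}. X j i \<noteq> 0}" using j by (auto simp: samp_def)
  thus ?thesis using H_card[OF HT_mem[OF X j]] dj by simp
qed


lemma HT_finite: "finite (H_tuples n t d)"
proof -
  have "H n e \<subseteq> Pi\<^sub>E {..<n} (\<lambda>_. {-1,0,1})" for e by (auto simp: H_def)
  hence "finite (H n e)" for e by (rule finite_subset) (simp add: finite_PiE)
  thus ?thesis by (simp add: H_tuples_def finite_PiE)
qed

lemma HT_nonempty:
  assumes d: "\<forall>s<t. d s \<in> {1..n}"
  shows "H_tuples n t d \<noteq> {}"
proof -
  define X where "X = restrict (\<lambda>j. restrict (\<lambda>r. if r < d j then 1 else 0 :: real) {..<n}) {..<t}"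
  have "X j \<in> H n (d j)" if j: "j < t" for j
  proof -
    have "{i\<in>{..<n}. X j i \<noteq> 0} = {..<d j}" using j d by (auto simp: X_def)
    thus ?thesis using j d by (auto simp: H_def X_def PiE_def extensional_def)
  qed
  hence "X \<in> H_tuples n t d" by (auto simp: H_tuples_def X_def)
  thus ?thesis by auto
qed

lemma fe_abs_le:
  assumes a: "a \<in> Pi_forms n t" and X: "X \<in> H_tuples n t d" and t: "t > 0"
    and d: "\<forall>s<t. d s \<in> {1..n}"
  shows "\<bar>form_eval n t a X\<bar> \<le> Min (d ` {..<t})"
proof -
  have "\<bar>form_eval n t a X\<bar> \<le> (\<Sum>s\<in>idx_tuples n t. \<bar>a s * (\<Prod>j<t. X j (s j))\<bar>)"
    unfolding form_eval_def by (rule sum_abs)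
  also have "\<dots> \<le> Min (d ` {..<t})" by (rule sum_c_le_min[OF a X t d])
  finally show ?thesis .
qed

lemma sq_diff_le: "(a - b)\<^sup>2 \<le> 2 * (a - c)\<^sup>2 + 2 * (b - c)\<^sup>2" for a b c :: real
proof -
  have "0 \<le> (a + b - 2 * c)\<^sup>2" by simp
  thus ?thesis by (simp add: power2_eq_square algebra_simps)
qed

lemma sq_sum_le: "(a)\<^sup>2 \<le> 2 * (a - c)\<^sup>2 + 2 * c\<^sup>2" for a c :: real
  using sq_diff_le[of a 0 c] by simp

lemma samp1_eq': "form_eval n t a (samp n t (Suc 0) X (\<lambda>_ _. 0)) = form_eval n t a X"
  using samp1_eq[of n t a X] by simp

locale chain_setup =
  fixes n t k :: nat and A :: "nat \<Rightarrow> (nat \<Rightarrow> nat) \<Rightarrow> real" and d :: "nat \<Rightarrow> nat"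
  assumes n2: "n \<ge> 2" and t1: "t \<ge> 1" and k1: "k \<ge> 1"
    and A: "\<forall>i<k. A i \<in> Pi_forms n t" and d: "\<forall>s<t. d s \<in> {1..n}"
begin

definition "D = Max (d ` {..<t})"
definition "mm = Min (d ` {..<t})"
definition "HT = H_tuples n t d"
definition "v X = (\<lambda>i. form_eval n t (A i) X)"
definition "K l = ((1 + t) * D) div 2 ^ l"
definition "err l = (1 + real t) * (real k * real (2 ^ l :: nat) ^ t * real t * real mm)"
definition "pip l X = (if l = 0 then samp n t 1 X (\<lambda>_ _. 0)
   else SOME Y. Y \<in> Fam n t (K l) (real (2 ^ l :: nat)) \<and> (\<Sum>i<k. (v Y i - v X i)\<^sup>2) \<le> err l)"

lemma t0: "t > 0" using t1 by simp

lemma D_facts: "d j \<le> D" "mm \<le> d j" if "j < t" for j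
  using that by (auto simp: D_def mm_def)

lemma mm_ge1: "mm \<ge> 1" and D_le: "D \<le> n" and mm_le_D: "mm \<le> D"
proof -
  have "mm \<in> d ` {..<t}" unfolding mm_def using t0 by (intro Min_in) auto
  thus "mm \<ge> 1" using d by auto
  have "D \<in> d ` {..<t}" unfolding D_def using t0 by (intro Max_in) auto
  thus "D \<le> n" using d by auto
  show "mm \<le> D" using D_facts[OF t0] by simp
qed

lemma HT_fin: "finite HT" by (simp add: HT_def HT_finite)
lemma HT_ne: "HT \<noteq> {}" using HT_nonempty[OF d] by (simp add: HT_def)

lemma v_bound: "X \<in> HT \<Longrightarrow> (\<Sum>i<k. (v X i)\<^sup>2) \<le> real k * real mm ^ 2"
proof -
  assume X: "X \<in> HT"
  have "(\<Sum>i<k. (v X i)\<^sup>2) \<le> (\<Sum>i<k. real mm ^ 2)"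
  proof (intro sum_mono)
    fix i assume "i \<in> {..<k}"
    hence "\<bar>v X i\<bar> \<le> real mm"
      using fe_abs_le[OF _ _ t0 d, of "A i" X] A X by (simp add: v_def HT_def mm_def)
    thus "(v X i)\<^sup>2 \<le> real mm ^ 2" by (simp add: abs_le_square_iff[symmetric])
  qed
  thus ?thesis by simp
qed

lemma pi_good:
  assumes X: "X \<in> HT"
  shows "pip l X \<in> Fam n t (K l) (real (2 ^ l :: nat)) \<and> (\<Sum>i<k. (v (pip l X) i - v X i)\<^sup>2) \<le> err l"
proof -
  have XH: "X \<in> H_tuples n t d" using X by (simp add: HT_def)
  have k0: "k > 0" using k1 by simp
  show ?thesis
proof (cases "l = 0")
  case True
  have v0: "v (pip l X) = v X" using True by (simp add: pip_def v_def samp1_eq')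
  have mem: "samp n t 1 X (\<lambda>_ _. 0) \<in> Fam n t (K 0) (real (1::nat))"
  proof (rule samp_Fam)
    show "X \<in> H_tuples n t d" by (rule XH)
    show "\<forall>j<t. card {r. samp n t 1 X (\<lambda>_ _. 0) j r \<noteq> 0} \<le> K 0"
    proof (intro allI impI)
      fix j assume j: "j < t"
      have "card {r. samp n t 1 X (\<lambda>_ _. 0) j r \<noteq> 0} = d j"
      proof -
        have "d j \<le> n" using d j by auto
        thus ?thesis by (rule supp_samp1[OF XH j])
      qed
      also have "\<dots> \<le> (1 + t) * D" using D_facts(1)[OF j] by simp
      finally show "card {r. samp n t 1 X (\<lambda>_ _. 0) j r \<noteq> 0} \<le> K 0" by (simp add: K_def)
    qed
  qed
  hence "pip l X \<in> Fam n t (K l) (real (2 ^ l :: nat))" using True by (simp add: pip_def)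
  moreover have "0 \<le> err l" by (simp add: err_def)
  ultimately show ?thesis using v0 by simp
next
  case False
  define M where "M = (2 ^ l :: nat)"
  have M1: "M \<ge> 1" by (simp add: M_def)
  obtain h where h: "h \<in> HH n t M"
    "(\<Sum>i<k. (form_eval n t (A i) (samp n t M X h) - form_eval n t (A i) X)\<^sup>2)
            \<le> (1 + real t) * (real k * real M ^ t * real t * real (Min (d ` {..<t})))"
    "\<forall>j<t. real (card {r. samp n t M X h j r \<noteq> 0}) * real M \<le> (1 + real t) * real (d j)"
    using sampling[OF t0 k0 M1 A d XH] by blast
  have ex: "\<exists>Y. Y \<in> Fam n t (K l) (real (2 ^ l :: nat)) \<and> (\<Sum>i<k. (v Y i - v X i)\<^sup>2) \<le> err l"
  proof (intro exI conjI)
    show "samp n t M X h \<in> Fam n t (K l) (real (2 ^ l :: nat))"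
      unfolding M_def[symmetric]
    proof (rule samp_Fam)
      show "X \<in> H_tuples n t d" using X by (simp add: HT_def)
      show "\<forall>j<t. card {r. samp n t M X h j r \<noteq> 0} \<le> K l"
      proof (intro allI impI)
        fix j assume j: "j < t"
        have "(1 + real t) * real (d j) \<le> (1 + real t) * real D"
          using D_facts(1)[OF j] by (intro mult_left_mono) auto
        hence "real (card {r. samp n t M X h j r \<noteq> 0}) * real M \<le> (1 + real t) * real D"
          using h(3) j by (meson order_trans)
        hence "real (card {r. samp n t M X h j r \<noteq> 0} * M) \<le> real ((1 + t) * D)"
          by (simp add: algebra_simps)
        hence "card {r. samp n t M X h j r \<noteq> 0} * M \<le> (1 + t) * D" by linarith
        thus "card {r. samp n t M X h j r \<noteq> 0} \<le> K l"
          by (simp add: K_def less_eq_div_iff_mult_less_eq M_def)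
      qed
    qed
    show "(\<Sum>i<k. (v (samp n t M X h) i - v X i)\<^sup>2) \<le> err l"
      using h(2) by (simp add: v_def err_def M_def mm_def)
  qed
  show ?thesis using someI_ex[OF ex] False by (simp add: pip_def)
qed
qed

lemma v_pi0: "v (pip 0 X) = v X"
  by (simp add: pip_def v_def samp1_eq')

lemma K_real: "real (K l) \<le> (1 + real t) * real D / 2 ^ l"
proof -
  have "K l * 2 ^ l \<le> (1 + t) * D" unfolding K_def by (rule div_times_less_eq_dividend)
  hence "real (K l * 2 ^ l) \<le> real ((1 + t) * D)" by (simp only: of_nat_le_iff)
  hence "real (K l) * 2 ^ l \<le> (1 + real t) * real D" by (simp add: algebra_simps)
  thus ?thesis by (simp add: field_simps)
qed

end


context chain_setup
begin

definition "Vstep l = (\<lambda>X. \<lambda>i. v (pip l X) i - v (pip (Suc l) X) i) ` HT"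
definition "Vfin L = (\<lambda>X. v (pip L X)) ` HT"
definition "G V \<epsilon> = Max ((\<lambda>w. \<Sum>i<k. \<epsilon> i * w i) ` V)"

lemma G_ge: "finite V \<Longrightarrow> w \<in> V \<Longrightarrow> (\<Sum>i<k. \<epsilon> i * w i) \<le> G V \<epsilon>"
  unfolding G_def by (intro Max_ge) auto

lemma chain_pointwise:
  "Max ((\<lambda>X. \<Sum>i<k. \<epsilon> i * form_eval n t (A i) X) ` HT) \<le> (\<Sum>l<L. G (Vstep l) \<epsilon>) + G (Vfin L) \<epsilon>"
proof -
  have "Max ((\<lambda>X. \<Sum>i<k. \<epsilon> i * form_eval n t (A i) X) ` HT) \<in> (\<lambda>X. \<Sum>i<k. \<epsilon> i * form_eval n t (A i) X) ` HT"
    using HT_fin HT_ne by (intro Max_in) auto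
  then obtain X0 where X0: "X0 \<in> HT" "Max ((\<lambda>X. \<Sum>i<k. \<epsilon> i * form_eval n t (A i) X) ` HT) = (\<Sum>i<k. \<epsilon> i * v X0 i)"
    by (auto simp: v_def)
  have tel: "v X0 i = (\<Sum>l<L. v (pip l X0) i - v (pip (Suc l) X0) i) + v (pip L X0) i" for i
  proof -
    have "(\<Sum>l<L. v (pip l X0) i - v (pip (Suc l) X0) i) = v (pip 0 X0) i - v (pip L X0) i"
      by (rule sum_lessThan_telescope'[of "\<lambda>l. v (pip l X0) i"])
    thus ?thesis by (simp add: v_pi0)
  qed
  have "(\<Sum>i<k. \<epsilon> i * v X0 i) = (\<Sum>i<k. \<Sum>l<L. \<epsilon> i * (v (pip l X0) i - v (pip (Suc l) X0) i)) + (\<Sum>i<k. \<epsilon> i * v (pip L X0) i)"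
    by (simp add: tel distrib_left sum.distrib sum_distrib_left)
  also have "\<dots> = (\<Sum>l<L. \<Sum>i<k. \<epsilon> i * (v (pip l X0) i - v (pip (Suc l) X0) i)) + (\<Sum>i<k. \<epsilon> i * v (pip L X0) i)"
    by (subst sum.swap) simp
  also have "\<dots> \<le> (\<Sum>l<L. G (Vstep l) \<epsilon>) + G (Vfin L) \<epsilon>"
  proof (rule add_mono)
    show "(\<Sum>l<L. \<Sum>i<k. \<epsilon> i * (v (pip l X0) i - v (pip (Suc l) X0) i)) \<le> (\<Sum>l<L. G (Vstep l) \<epsilon>)"
    proof (rule sum_mono)
      fix l
      have "(\<lambda>i. v (pip l X0) i - v (pip (Suc l) X0) i) \<in> Vstep l" using X0(1) by (auto simp: Vstep_def)
      moreover have "finite (Vstep l)" using HT_fin by (simp add: Vstep_def)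
      ultimately show "(\<Sum>i<k. \<epsilon> i * (v (pip l X0) i - v (pip (Suc l) X0) i)) \<le> G (Vstep l) \<epsilon>"
        using G_ge[of "Vstep l" "\<lambda>i. v (pip l X0) i - v (pip (Suc l) X0) i" \<epsilon>] by simp
    qed
    have "v (pip L X0) \<in> Vfin L" using X0(1) by (auto simp: Vfin_def)
    moreover have "finite (Vfin L)" using HT_fin by (simp add: Vfin_def)
    ultimately show "(\<Sum>i<k. \<epsilon> i * v (pip L X0) i) \<le> G (Vfin L) \<epsilon>" by (rule G_ge[rotated])
  qed
  finally show ?thesis using X0(2) by simp
qed

lemma chain_ineq:
  "exp_max n t k A d \<le> (\<Sum>l<L. (\<Sum>\<epsilon>\<in>Rad k. G (Vstep l) \<epsilon>) / 2 ^ k) + (\<Sum>\<epsilon>\<in>Rad k. G (Vfin L) \<epsilon>) / 2 ^ k"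
proof -
  have "exp_max n t k A d = (\<Sum>\<epsilon>\<in>Rad k. Max ((\<lambda>X. \<Sum>i<k. \<epsilon> i * form_eval n t (A i) X) ` HT)) / 2 ^ k"
    by (simp add: exp_max_def Rad_def HT_def)
  also have "\<dots> \<le> (\<Sum>\<epsilon>\<in>Rad k. (\<Sum>l<L. G (Vstep l) \<epsilon>) + G (Vfin L) \<epsilon>) / 2 ^ k"
    by (intro divide_right_mono sum_mono chain_pointwise) auto
  also have "\<dots> = (\<Sum>l<L. (\<Sum>\<epsilon>\<in>Rad k. G (Vstep l) \<epsilon>) / 2 ^ k) + (\<Sum>\<epsilon>\<in>Rad k. G (Vfin L) \<epsilon>) / 2 ^ k"
    by (simp add: sum.distrib add_divide_distrib sum_divide_distrib) (subst sum.swap, simp)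
  finally show ?thesis .
qed

lemma n1: "n \<ge> 1" using n2 by simp

lemma ln_card_le:
  assumes "finite V" "V \<noteq> {}" "card V \<le> (3 * n) ^ E"
  shows "ln (card V) \<le> real E * ln (3 * real n)"
proof -
  have c: "real (card V) > 0" using assms by (simp add: card_gt_0_iff)
  have le: "real (card V) \<le> real ((3 * n) ^ E)" using assms(3) by (simp only: of_nat_le_iff)
  have pos: "0 < real ((3 * n) ^ E)" using n1 by simp
  have "ln (card V) \<le> ln (real ((3 * n) ^ E))" using le ln_le_cancel_iff[OF c pos] by simp
  also have "ln (real ((3 * n) ^ E)) = ln ((3 * real n) ^ E)" by simp
  also have "\<dots> = real E * ln (3 * real n)" using n1 by (intro ln_realpow)
  finally show ?thesis .
qed

lemma step_bound:
  "(\<Sum>\<epsilon>\<in>Rad k. G (Vstep l) \<epsilon>) / 2 ^ k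
     \<le> sqrt (2 * err l + 2 * err (Suc l)) * sqrt (2 * (real (t * K l + t * K (Suc l)) * ln (3 * real n)))"
proof -
  define F1 where "F1 = Fam n t (K l) (real (2 ^ l :: nat))"
  define F2 where "F2 = Fam n t (K (Suc l)) (real (2 ^ Suc l :: nat))"
  have fin1: "finite F1" and c1: "card F1 \<le> (3 * n) ^ (t * K l)"
    using card_Fam[OF n1] by (auto simp: F1_def)
  have fin2: "finite F2" and c2: "card F2 \<le> (3 * n) ^ (t * K (Suc l))"
    using card_Fam[OF n1] by (auto simp: F2_def)
  have sub: "Vstep l \<subseteq> (\<lambda>(Y, Z). \<lambda>i. v Y i - v Z i) ` (F1 \<times> F2)"
  proof
    fix w assume "w \<in> Vstep l"
    then obtain X where X: "X \<in> HT" "w = (\<lambda>i. v (pip l X) i - v (pip (Suc l) X) i)" by (auto simp: Vstep_def)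
    have "(pip l X, pip (Suc l) X) \<in> F1 \<times> F2"
      using pi_good[OF X(1), of l] pi_good[OF X(1), of "Suc l"] unfolding F1_def F2_def by blast
    thus "w \<in> (\<lambda>(Y, Z). \<lambda>i. v Y i - v Z i) ` (F1 \<times> F2)" using X(2) by force
  qed
  have finV: "finite (Vstep l)" using HT_fin by (simp add: Vstep_def)
  have neV: "Vstep l \<noteq> {}" using HT_ne by (simp add: Vstep_def)
  have "card (Vstep l) \<le> card ((\<lambda>(Y, Z). \<lambda>i. v Y i - v Z i) ` (F1 \<times> F2))"
    using sub fin1 fin2 by (intro card_mono) auto
  also have "\<dots> \<le> card (F1 \<times> F2)" using fin1 fin2 by (intro card_image_le) auto
  also have "\<dots> = card F1 * card F2" by (rule card_cartesian_product)
  also have "\<dots> \<le> (3 * n) ^ (t * K l) * (3 * n) ^ (t * K (Suc l))" using c1 c2 by (rule mult_le_mono)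
  also have "\<dots> = (3 * n) ^ (t * K l + t * K (Suc l))" by (simp add: power_add)
  finally have cV: "card (Vstep l) \<le> (3 * n) ^ (t * K l + t * K (Suc l))" .
  have R: "(\<Sum>i<k. (w i)\<^sup>2) \<le> (sqrt (2 * err l + 2 * err (Suc l)))\<^sup>2" if wV: "w \<in> Vstep l" for w
  proof -
    obtain X where X: "X \<in> HT" "w = (\<lambda>i. v (pip l X) i - v (pip (Suc l) X) i)"
      using wV unfolding Vstep_def by blast
    have e0: "0 \<le> err l" "0 \<le> err (Suc l)" by (simp_all add: err_def)
    have "(\<Sum>i<k. (w i)\<^sup>2) \<le> (\<Sum>i<k. 2 * (v (pip l X) i - v X i)\<^sup>2 + 2 * (v (pip (Suc l) X) i - v X i)\<^sup>2)"
      using X(2) by (intro sum_mono) (simp add: sq_diff_le)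
    also have "\<dots> = 2 * (\<Sum>i<k. (v (pip l X) i - v X i)\<^sup>2) + 2 * (\<Sum>i<k. (v (pip (Suc l) X) i - v X i)\<^sup>2)"
      by (simp add: sum.distrib sum_distrib_left)
    also have "\<dots> \<le> 2 * err l + 2 * err (Suc l)"
      using pi_good[OF X(1), of l] pi_good[OF X(1), of "Suc l"] by simp
    finally show ?thesis using e0 by simp
  qed
  show ?thesis
    unfolding G_def
    by (rule massart[OF finV neV R _ ln_card_le[OF finV neV cV]]) (auto simp: err_def)
qed

lemma fin_bound:
  "(\<Sum>\<epsilon>\<in>Rad k. G (Vfin L) \<epsilon>) / 2 ^ k
     \<le> sqrt (2 * real k * real mm ^ 2 + 2 * err L) * sqrt (2 * (real (t * K L) * ln (3 * real n)))"
proof -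
  define F1 where "F1 = Fam n t (K L) (real (2 ^ L :: nat))"
  have fin1: "finite F1" and c1: "card F1 \<le> (3 * n) ^ (t * K L)"
    using card_Fam[OF n1] by (auto simp: F1_def)
  have sub: "Vfin L \<subseteq> v ` F1"
  proof
    fix w assume "w \<in> Vfin L"
    then obtain X where X: "X \<in> HT" "w = v (pip L X)" by (auto simp: Vfin_def)
    thus "w \<in> v ` F1" using pi_good[OF X(1)] by (auto simp: F1_def)
  qed
  have finV: "finite (Vfin L)" using HT_fin by (simp add: Vfin_def)
  have neV: "Vfin L \<noteq> {}" using HT_ne by (simp add: Vfin_def)
  have "card (Vfin L) \<le> card (v ` F1)" using sub fin1 by (intro card_mono) auto
  also have "\<dots> \<le> card F1" using fin1 by (rule card_image_le)
  finally have cV: "card (Vfin L) \<le> (3 * n) ^ (t * K L)" using c1 by simp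
  have R: "(\<Sum>i<k. (w i)\<^sup>2) \<le> (sqrt (2 * real k * real mm ^ 2 + 2 * err L))\<^sup>2" if wV: "w \<in> Vfin L" for w
  proof -
    obtain X where X: "X \<in> HT" "w = v (pip L X)" using wV unfolding Vfin_def by blast
    have e0: "0 \<le> err L" by (simp add: err_def)
    have "(\<Sum>i<k. (w i)\<^sup>2) \<le> (\<Sum>i<k. 2 * (v (pip L X) i - v X i)\<^sup>2 + 2 * (v X i)\<^sup>2)"
      using X(2) by (intro sum_mono) (simp add: sq_sum_le)
    also have "\<dots> = 2 * (\<Sum>i<k. (v (pip L X) i - v X i)\<^sup>2) + 2 * (\<Sum>i<k. (v X i)\<^sup>2)"
      by (simp add: sum.distrib sum_distrib_left)
    also have "\<dots> \<le> 2 * err L + 2 * (real k * real mm ^ 2)"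
      using pi_good[OF X(1), of L] v_bound[OF X(1)] by simp
    finally show ?thesis using e0 by (simp add: algebra_simps)
  qed
  show ?thesis
    unfolding G_def
    by (rule massart[OF finV neV R _ ln_card_le[OF finV neV cV]]) (auto simp: err_def)
qed

end


lemma sqrt_prod_le:
  fixes a b c :: real
  assumes "a \<ge> 0" "b \<ge> 0" "a * b \<le> c"
  shows "sqrt a * sqrt b \<le> sqrt c"
  using assms by (simp add: real_sqrt_mult[symmetric])

lemma geo_le:
  fixes \<rho> :: real
  assumes "\<rho> \<ge> 2"
  shows "(\<Sum>l<L. \<rho> ^ l) \<le> \<rho> ^ L - 1"
proof (induction L)
  case 0 then show ?case by simp
next
  case (Suc L)
  have "(\<Sum>l<Suc L. \<rho> ^ l) \<le> \<rho> ^ L - 1 + \<rho> ^ L" using Suc by simp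
  also have "\<dots> \<le> \<rho> ^ Suc L - 1"
  proof -
    have "2 * \<rho> ^ L \<le> \<rho> * \<rho> ^ L" using assms by (intro mult_right_mono) auto
    thus ?thesis by simp
  qed
  finally show ?case .
qed

lemma ln3n: "n \<ge> 2 \<Longrightarrow> ln (3 * real n) \<le> 3 * ln (real n)"
proof -
  assume n: "n \<ge> 2"
  have "ln (3 * real n) = ln 3 + ln (real n)" using n by (simp add: ln_mult)
  moreover have "ln (3::real) \<le> ln (real n ^ 2)"
  proof -
    have "(3::real) \<le> real n ^ 2"
    proof -
      have "(2::real) \<le> real n" using n by simp
      hence "2 * 2 \<le> real n * real n" by (intro mult_mono) auto
      thus ?thesis by (simp add: power2_eq_square)
    qed
    thus ?thesis using n by (subst ln_le_cancel_iff) auto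
  qed
  moreover have "ln (real n ^ 2) = 2 * ln (real n)" using n by (simp add: ln_realpow)
  ultimately show ?thesis by simp
qed

context chain_setup
begin

definition "c1 = 48 * real t ^ 2 * (1 + real t) ^ 2 * 2 ^ t"
definition "c2 = 12 * (1 + (1 + real t) * real t) * real t * (1 + real t)"

lemma lnn_pos: "ln (real n) > 0" using n2 by simp

lemma step_num:
  "sqrt (2 * err l + 2 * err (Suc l)) * sqrt (2 * (real (t * K l + t * K (Suc l)) * ln (3 * real n)))
    \<le> sqrt c1 * sqrt (real k * real mm * real D * ln (real n)) * sqrt (2 ^ (t - 1)) ^ l"
proof -
  define p :: real where "p = 2 ^ l"
  have p0: "p > 0" by (simp add: p_def)
  have tt: "real t \<ge> 1" using t1 by simp
  define Q where "Q = real k * real mm * real D * ln (real n)"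
  have Q0: "Q \<ge> 0" using lnn_pos by (simp add: Q_def)
  have err_l: "err l = (1 + real t) * real k * real t * real mm * p ^ t"
    by (simp add: err_def p_def)
  have err_Sl: "err (Suc l) = (1 + real t) * real k * real t * real mm * 2 ^ t * p ^ t"
    by (simp add: err_def p_def power_mult_distrib)
  have two_t: "(1::real) \<le> 2 ^ t" by simp
  have a_le: "2 * err l + 2 * err (Suc l) \<le> 4 * (1 + real t) * real k * real t * real mm * 2 ^ t * p ^ t"
  proof -
    have "2 * err l + 2 * err (Suc l) = (2 * (1 + real t) * real k * real t * real mm * p ^ t) * (1 + 2 ^ t)"
      by (simp add: err_l err_Sl algebra_simps)
    also have "\<dots> \<le> (2 * (1 + real t) * real k * real t * real mm * p ^ t) * (2 * 2 ^ t)"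
      using two_t p0 by (intro mult_left_mono) auto
    finally show ?thesis by (simp add: algebra_simps)
  qed
  have a0: "0 \<le> 2 * err l + 2 * err (Suc l)" by (simp add: err_def)
  have Kl: "real (K l) \<le> (1 + real t) * real D / p" using K_real[of l] by (simp add: p_def)
  have KSl: "real (K (Suc l)) \<le> (1 + real t) * real D / p"
  proof -
    have "real (K (Suc l)) \<le> (1 + real t) * real D / (2 * p)" using K_real[of "Suc l"] by (simp add: p_def)
    also have "\<dots> \<le> (1 + real t) * real D / p" using p0 by (intro divide_left_mono) auto
    finally show ?thesis .
  qed
  have ln0: "0 \<le> ln (3 * real n)" using n2 by simp
  have b_le: "2 * (real (t * K l + t * K (Suc l)) * ln (3 * real n)) \<le> 12 * real t * (1 + real t) * real D * ln (real n) / p"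
  proof -
    have "real (t * K l + t * K (Suc l)) \<le> 2 * real t * ((1 + real t) * real D / p)"
    proof -
      have "real (t * K l + t * K (Suc l)) = real t * real (K l) + real t * real (K (Suc l))" by simp
      also have "\<dots> \<le> real t * ((1 + real t) * real D / p) + real t * ((1 + real t) * real D / p)"
        using Kl KSl by (intro add_mono mult_left_mono) auto
      finally show ?thesis by simp
    qed
    hence "real (t * K l + t * K (Suc l)) * ln (3 * real n) \<le> 2 * real t * ((1 + real t) * real D / p) * ln (3 * real n)"
      using ln0 by (intro mult_right_mono) auto
    also have "\<dots> \<le> 2 * real t * ((1 + real t) * real D / p) * (3 * ln (real n))"
      using ln3n[OF n2] p0 by (intro mult_left_mono) auto
    finally have h: "real (t * K l + t * K (Suc l)) * ln (3 * real n) \<le> 2 * real t * ((1 + real t) * real D / p) * (3 * ln (real n))" .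
    have "2 * (real (t * K l + t * K (Suc l)) * ln (3 * real n)) \<le> 2 * (2 * real t * ((1 + real t) * real D / p) * (3 * ln (real n)))"
      using h by linarith
    also have "\<dots> = 12 * real t * (1 + real t) * real D * ln (real n) / p" by (simp add: field_simps)
    finally show ?thesis .
  qed
  have b0: "0 \<le> 2 * (real (t * K l + t * K (Suc l)) * ln (3 * real n))" using ln0 by simp
  have prod: "(2 * err l + 2 * err (Suc l)) * (2 * (real (t * K l + t * K (Suc l)) * ln (3 * real n)))
       \<le> c1 * Q * (2 ^ (t - 1)) ^ l"
  proof -
    have "(2 * err l + 2 * err (Suc l)) * (2 * (real (t * K l + t * K (Suc l)) * ln (3 * real n)))
      \<le> (4 * (1 + real t) * real k * real t * real mm * 2 ^ t * p ^ t) * (12 * real t * (1 + real t) * real D * ln (real n) / p)"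
      using a_le b_le a0 b0 by (intro mult_mono) auto
    also have "\<dots> = c1 * Q * (p ^ t / p)"
      unfolding c1_def Q_def using p0 by (simp add: field_simps power2_eq_square)
    also have "p ^ t / p = p ^ (t - 1)"
    proof -
      have "p ^ t = p * p ^ (t - 1)" using t1 by (cases t) auto
      thus ?thesis using p0 by simp
    qed
    also have "p ^ (t - 1) = (2 ^ (t - 1)) ^ l"
      by (simp add: p_def power_mult[symmetric] mult.commute)
    finally show ?thesis .
  qed
  have "sqrt (2 * err l + 2 * err (Suc l)) * sqrt (2 * (real (t * K l + t * K (Suc l)) * ln (3 * real n)))
      \<le> sqrt (c1 * Q * (2 ^ (t - 1)) ^ l)"
    by (rule sqrt_prod_le[OF a0 b0 prod])
  also have "\<dots> = sqrt c1 * sqrt Q * sqrt (2 ^ (t - 1)) ^ l"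
    by (simp add: real_sqrt_mult real_sqrt_power)
  finally show ?thesis by (simp add: Q_def)
qed

lemma fin_num:
  assumes PL: "(2::real) ^ (L * t) \<le> real mm"
  shows "sqrt (2 * real k * real mm ^ 2 + 2 * err L) * sqrt (2 * (real (t * K L) * ln (3 * real n)))
    \<le> sqrt c2 * sqrt (real k * real D * ln (real n)) * sqrt (real mm ^ 2 / 2 ^ L)"
proof -
  define p :: real where "p = 2 ^ L"
  have p0: "p > 0" by (simp add: p_def)
  define Q where "Q = real k * real D * ln (real n)"
  have Q0: "Q \<ge> 0" using lnn_pos by (simp add: Q_def)
  have m0: "real mm \<ge> 0" by simp
  have pt: "p ^ t \<le> real mm" using PL by (simp add: p_def power_mult)
  have a_le: "2 * real k * real mm ^ 2 + 2 * err L \<le> 2 * (1 + (1 + real t) * real t) * real k * real mm ^ 2"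
  proof -
    have "err L = (1 + real t) * real k * real t * real mm * p ^ t" by (simp add: err_def p_def)
    also have "\<dots> \<le> (1 + real t) * real k * real t * real mm * real mm"
      using pt by (intro mult_left_mono) auto
    finally have "err L \<le> (1 + real t) * real t * real k * real mm ^ 2"
      by (simp add: power2_eq_square algebra_simps)
    thus ?thesis by (simp add: algebra_simps)
  qed
  have a0: "0 \<le> 2 * real k * real mm ^ 2 + 2 * err L" by (simp add: err_def)
  have ln0: "0 \<le> ln (3 * real n)" using n2 by simp
  have KL: "real (K L) \<le> (1 + real t) * real D / p" using K_real[of L] by (simp add: p_def)
  have b_le: "2 * (real (t * K L) * ln (3 * real n)) \<le> 6 * real t * (1 + real t) * real D * ln (real n) / p"
  proof -
    have "real (t * K L) = real t * real (K L)" by simp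
    also have "\<dots> \<le> real t * ((1 + real t) * real D / p)"
      using KL by (intro mult_left_mono) auto
    finally have "real (t * K L) \<le> real t * ((1 + real t) * real D / p)" .
    hence "real (t * K L) * ln (3 * real n) \<le> real t * ((1 + real t) * real D / p) * ln (3 * real n)"
      using ln0 by (intro mult_right_mono) auto
    also have "\<dots> \<le> real t * ((1 + real t) * real D / p) * (3 * ln (real n))"
      using ln3n[OF n2] p0 by (intro mult_left_mono) auto
    finally have h: "real (t * K L) * ln (3 * real n) \<le> real t * ((1 + real t) * real D / p) * (3 * ln (real n))" .
    have "2 * (real (t * K L) * ln (3 * real n)) \<le> 2 * (real t * ((1 + real t) * real D / p) * (3 * ln (real n)))"
      using h by linarith
    also have "\<dots> = 6 * real t * (1 + real t) * real D * ln (real n) / p" by (simp add: field_simps)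
    finally show ?thesis .
  qed
  have b0: "0 \<le> 2 * (real (t * K L) * ln (3 * real n))" using ln0 by simp
  have prod: "(2 * real k * real mm ^ 2 + 2 * err L) * (2 * (real (t * K L) * ln (3 * real n)))
      \<le> c2 * Q * (real mm ^ 2 / p)"
  proof -
    have "(2 * real k * real mm ^ 2 + 2 * err L) * (2 * (real (t * K L) * ln (3 * real n)))
       \<le> (2 * (1 + (1 + real t) * real t) * real k * real mm ^ 2) * (6 * real t * (1 + real t) * real D * ln (real n) / p)"
      using a_le b_le a0 b0 by (intro mult_mono) auto
    also have "\<dots> = c2 * Q * (real mm ^ 2 / p)"
      unfolding c2_def Q_def using p0 by (simp add: field_simps power2_eq_square)
    finally show ?thesis .
  qed
  have "sqrt (2 * real k * real mm ^ 2 + 2 * err L) * sqrt (2 * (real (t * K L) * ln (3 * real n)))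
      \<le> sqrt (c2 * Q * (real mm ^ 2 / p))"
    by (rule sqrt_prod_le[OF a0 b0 prod])
  also have "\<dots> = sqrt c2 * sqrt Q * sqrt (real mm ^ 2 / p)"
    by (simp only: real_sqrt_mult)
  finally show ?thesis by (simp add: Q_def p_def)
qed

end


definition Ct :: "nat \<Rightarrow> real" where
  "Ct t = sqrt (48 * real t ^ 2 * (1 + real t) ^ 2 * 2 ^ t)
        + sqrt (12 * (1 + (1 + real t) * real t) * real t * (1 + real t)) * sqrt 2"

context chain_setup
begin

lemma exists_L: "\<exists>L. 2 ^ (L * t) \<le> mm \<and> mm < 2 ^ (Suc L * t)"
proof -
  define S where "S = {l. 2 ^ (l * t) \<le> mm}"
  have sub: "S \<subseteq> {..mm}"
  proof
    fix l assume "l \<in> S"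
    hence h: "2 ^ (l * t) \<le> mm" by (simp add: S_def)
    have "l < 2 ^ l" by (rule less_exp)
    also have "(2::nat) ^ l \<le> 2 ^ (l * t)" using t1 by (intro power_increasing) auto
    finally show "l \<in> {..mm}" using h by simp
  qed
  have finS: "finite S" using sub by (rule finite_subset) simp
  have "0 \<in> S" using mm_ge1 by (simp add: S_def)
  hence ne: "S \<noteq> {}" by auto
  define L where "L = Max S"
  have "L \<in> S" unfolding L_def using finS ne by (rule Max_in)
  moreover have "Suc L \<notin> S"
  proof
    assume "Suc L \<in> S"
    hence "Suc L \<le> L" unfolding L_def by (rule Max_ge[OF finS])
    thus False by simp
  qed
  ultimately show ?thesis by (auto simp: S_def)
qed

lemma main_bound:
  assumes t3: "t \<ge> 3"
  shows "exp_max n t k A d \<le> Ct t * sqrt (real k * real D * ln (real n)) * real mm powr (1 - 1 / (2 * real t))"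
proof -
  obtain L where L1: "2 ^ (L * t) \<le> mm" and L2: "mm < 2 ^ (Suc L * t)" using exists_L by blast
  define \<mu> where "\<mu> = real mm powr (1 / (2 * real t))"
  have m0: "real mm > 0" using mm_ge1 by simp
  have mu0: "\<mu> > 0" using m0 by (simp add: \<mu>_def)
  have mu_pow: "\<mu> ^ (2 * t) = real mm"
  proof -
    have "\<mu> ^ (2 * t) = real mm powr (real (2 * t) * (1 / (2 * real t)))"
      unfolding \<mu>_def using m0 by (subst powr_power) auto
    also have "real (2 * t) * (1 / (2 * real t)) = 1" using t1 by simp
    finally show ?thesis using m0 by simp
  qed
  have tS: "t = Suc (t - 1)" using t1 by simp
  have PL: "(2::real) ^ L \<le> \<mu> ^ 2"
  proof -
    have "((2::real) ^ L) ^ t = 2 ^ (L * t)" by (simp add: power_mult)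
    also have "\<dots> \<le> real mm" using L1 by (metis of_nat_le_iff of_nat_numeral of_nat_power)
    also have "\<dots> = (\<mu> ^ 2) ^ t" using mu_pow by (simp add: power_mult)
    finally have "((2::real) ^ L) ^ Suc (t - 1) \<le> (\<mu> ^ 2) ^ Suc (t - 1)" using tS by simp
    thus ?thesis by (rule power_le_imp_le_base) simp
  qed
  have PL2: "\<mu> ^ 2 < 2 * 2 ^ L"
  proof -
    have "(\<mu> ^ 2) ^ t = real mm" using mu_pow by (simp add: power_mult)
    also have "\<dots> < 2 ^ (Suc L * t)" using L2 by (metis of_nat_less_iff of_nat_numeral of_nat_power)
    also have "\<dots> = (2 * 2 ^ L) ^ t" by (simp add: power_add power_mult power_mult_distrib)
    finally show ?thesis by (rule power_less_imp_less_base) simp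
  qed
  have PLt: "(2::real) ^ (L * t) \<le> real mm" using L1 by (metis of_nat_le_iff of_nat_numeral of_nat_power)
  define Z where "Z = sqrt (real k * real D * ln (real n))"
  have Z0: "Z \<ge> 0" using lnn_pos by (simp add: Z_def)
  have sqm: "sqrt (real mm) = \<mu> ^ t"
  proof -
    have "real mm = (\<mu> ^ t) ^ 2" using mu_pow by (simp add: power_mult[symmetric] mult.commute)
    thus ?thesis using mu0 by simp
  qed
  have Y: "sqrt (real k * real mm * real D * ln (real n)) = Z * \<mu> ^ t"
  proof -
    have "real k * real mm * real D * ln (real n) = (real k * real D * ln (real n)) * real mm" by simp
    thus ?thesis by (simp add: Z_def real_sqrt_mult sqm)
  qed
  define \<rho> where "\<rho> = sqrt (2 ^ (t - 1) :: real)"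
  have rho2: "\<rho> \<ge> 2"
  proof -
    have "(4::real) \<le> 2 ^ (t - 1)"
    proof -
      have "(2::real) ^ 2 \<le> 2 ^ (t - 1)" using t3 by (intro power_increasing) auto
      thus ?thesis by simp
    qed
    hence "sqrt 4 \<le> \<rho>" unfolding \<rho>_def by (rule real_sqrt_le_mono)
    thus ?thesis by simp
  qed
  have rhoL: "\<rho> ^ L \<le> \<mu> ^ (t - 1)"
  proof -
    have "\<rho> ^ L = sqrt (((2::real) ^ L) ^ (t - 1))"
      by (simp add: \<rho>_def real_sqrt_power power_mult[symmetric] mult.commute)
    also have "\<dots> \<le> sqrt ((\<mu> ^ 2) ^ (t - 1))"
      using PL by (intro real_sqrt_le_mono power_mono) auto
    also have "(\<mu> ^ 2) ^ (t - 1) = (\<mu> ^ (t - 1)) ^ 2"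
      by (simp only: power_mult[symmetric] mult.commute)
    also have "sqrt ((\<mu> ^ (t - 1)) ^ 2) = \<mu> ^ (t - 1)"
      using mu0 by simp
    finally show ?thesis .
  qed
  have chain: "(\<Sum>l<L. (\<Sum>\<epsilon>\<in>Rad k. G (Vstep l) \<epsilon>) / 2 ^ k) \<le> sqrt c1 * Z * \<mu> ^ (2 * t - 1)"
  proof -
    have "(\<Sum>l<L. (\<Sum>\<epsilon>\<in>Rad k. G (Vstep l) \<epsilon>) / 2 ^ k) \<le> (\<Sum>l<L. sqrt c1 * (Z * \<mu> ^ t) * \<rho> ^ l)"
    proof (rule sum_mono)
      fix l
      show "(\<Sum>\<epsilon>\<in>Rad k. G (Vstep l) \<epsilon>) / 2 ^ k \<le> sqrt c1 * (Z * \<mu> ^ t) * \<rho> ^ l"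
        using step_bound[of l] step_num[of l] Y by (simp add: \<rho>_def)
    qed
    also have "\<dots> = sqrt c1 * (Z * \<mu> ^ t) * (\<Sum>l<L. \<rho> ^ l)" by (simp add: sum_distrib_left)
    also have "\<dots> \<le> sqrt c1 * (Z * \<mu> ^ t) * \<rho> ^ L"
    proof -
      have "(\<Sum>l<L. \<rho> ^ l) \<le> \<rho> ^ L" using geo_le[OF rho2, of L] by simp
      thus ?thesis using Z0 mu0 by (intro mult_left_mono) (auto simp: c1_def)
    qed
    also have "\<dots> \<le> sqrt c1 * (Z * \<mu> ^ t) * \<mu> ^ (t - 1)"
      using rhoL Z0 mu0 by (intro mult_left_mono) (auto simp: c1_def)
    also have "\<dots> = sqrt c1 * Z * \<mu> ^ (2 * t - 1)"
    proof -
      have "\<mu> ^ t * \<mu> ^ (t - 1) = \<mu> ^ (t + (t - 1))" by (simp only: power_add)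
      also have "t + (t - 1) = 2 * t - 1" using t1 by simp
      finally have "\<mu> ^ t * \<mu> ^ (t - 1) = \<mu> ^ (2 * t - 1)" .
      thus ?thesis by (simp add: algebra_simps)
    qed
    finally show ?thesis .
  qed
  have fin: "(\<Sum>\<epsilon>\<in>Rad k. G (Vfin L) \<epsilon>) / 2 ^ k \<le> sqrt c2 * sqrt 2 * Z * \<mu> ^ (2 * t - 1)"
  proof -
    have "(\<Sum>\<epsilon>\<in>Rad k. G (Vfin L) \<epsilon>) / 2 ^ k \<le> sqrt c2 * Z * sqrt (real mm ^ 2 / 2 ^ L)"
      using fin_bound[of L] fin_num[OF PLt] by (simp add: Z_def)
    also have "sqrt (real mm ^ 2 / 2 ^ L) \<le> sqrt 2 * \<mu> ^ (2 * t - 1)"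
    proof -
      have "real mm ^ 2 / 2 ^ L \<le> real mm ^ 2 / (\<mu> ^ 2 / 2)"
        using PL2 mu0 by (intro divide_left_mono) (auto simp: field_simps)
      also have "\<dots> = 2 * (\<mu> ^ (2 * t - 1)) ^ 2"
      proof -
        have s1: "Suc (2 * t - 1) = 2 * t" using t1 by simp
        have "\<mu> * \<mu> ^ (2 * t - 1) = \<mu> ^ Suc (2 * t - 1)" by (simp only: power_Suc)
        hence e: "\<mu> * \<mu> ^ (2 * t - 1) = real mm" using s1 mu_pow by simp
        have "real mm ^ 2 = (\<mu> * \<mu> ^ (2 * t - 1)) ^ 2" using e by simp
        hence "real mm ^ 2 = \<mu> ^ 2 * (\<mu> ^ (2 * t - 1)) ^ 2" by (simp only: power_mult_distrib)
        thus ?thesis using mu0 by (simp add: field_simps)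
      qed
      finally have "sqrt (real mm ^ 2 / 2 ^ L) \<le> sqrt (2 * (\<mu> ^ (2 * t - 1)) ^ 2)"
        by (rule real_sqrt_le_mono)
      also have "\<dots> = sqrt 2 * \<mu> ^ (2 * t - 1)" using mu0 by (simp add: real_sqrt_mult)
      finally show ?thesis .
    qed
    hence "sqrt c2 * Z * sqrt (real mm ^ 2 / 2 ^ L) \<le> sqrt c2 * Z * (sqrt 2 * \<mu> ^ (2 * t - 1))"
      using Z0 by (intro mult_left_mono) (auto simp: c2_def)
    finally show ?thesis by (simp add: algebra_simps)
  qed
  have "exp_max n t k A d \<le> sqrt c1 * Z * \<mu> ^ (2 * t - 1) + sqrt c2 * sqrt 2 * Z * \<mu> ^ (2 * t - 1)"
    using chain_ineq[of L] chain fin by linarith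
  also have "\<dots> = Ct t * Z * \<mu> ^ (2 * t - 1)"
    by (simp add: Ct_def c1_def c2_def algebra_simps)
  also have "\<mu> ^ (2 * t - 1) = real mm powr (1 - 1 / (2 * real t))"
  proof -
    have "\<mu> ^ (2 * t - 1) = real mm powr (real (2 * t - 1) * (1 / (2 * real t)))"
      unfolding \<mu>_def using m0 by (subst powr_power) auto
    also have "real (2 * t - 1) * (1 / (2 * real t)) = 1 - 1 / (2 * real t)"
      using t1 by (simp add: of_nat_diff field_simps)
    finally show ?thesis .
  qed
  finally show ?thesis by (simp add: Z_def)
qed

end


theorem lemma4p5:
  fixes t :: nat
  assumes "t \<ge> 3"
  shows "\<exists>C::real. C > 0 \<and>
    (\<forall>n k (A :: nat \<Rightarrow> (nat \<Rightarrow> nat) \<Rightarrow> real) (d :: nat \<Rightarrow> nat).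
       n \<ge> 2 \<longrightarrow> (\<forall>i<k. A i \<in> Pi_forms n t) \<longrightarrow> (\<forall>s<t. d s \<in> {1..n}) \<longrightarrow>
       exp_max n t k A d
         \<le> C * sqrt (real k * real (Max (d ` {..<t})) * ln (real n))
             * real (Min (d ` {..<t})) powr (1 - 1 / (2 * real t)))"
proof -
  have t1: "t \<ge> 1" using assms by simp
  have C0: "Ct t > 0"
  proof -
    have "0 < 48 * real t ^ 2 * (1 + real t) ^ 2 * 2 ^ t" using t1 by simp
    hence "0 < sqrt (48 * real t ^ 2 * (1 + real t) ^ 2 * 2 ^ t)" by simp
    moreover have "0 \<le> sqrt (12 * (1 + (1 + real t) * real t) * real t * (1 + real t)) * sqrt 2" by simp
    ultimately show ?thesis unfolding Ct_def by linarith
  qed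
  show ?thesis
  proof (intro exI[of _ "Ct t"] conjI allI impI)
    show "Ct t > 0" by (rule C0)
    fix n k and A :: "nat \<Rightarrow> (nat \<Rightarrow> nat) \<Rightarrow> real" and d :: "nat \<Rightarrow> nat"
    assume n: "n \<ge> 2" and A: "\<forall>i<k. A i \<in> Pi_forms n t" and d: "\<forall>s<t. d s \<in> {1..n}"
    show "exp_max n t k A d
         \<le> Ct t * sqrt (real k * real (Max (d ` {..<t})) * ln (real n))
             * real (Min (d ` {..<t})) powr (1 - 1 / (2 * real t))"
    proof (cases "k = 0")
      case True
      have ne: "H_tuples n t d \<noteq> {}" by (rule HT_nonempty[OF d])
      have "exp_max n t k A d = 0"
      proof -
        have "(\<lambda>X. \<Sum>i<k. \<epsilon> i * form_eval n t (A i) X) ` H_tuples n t d = {0}" for \<epsilon> :: "nat \<Rightarrow> real"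
          using ne True by auto
        thus ?thesis using True by (simp add: exp_max_def)
      qed
      moreover have "0 \<le> Ct t * sqrt (real k * real (Max (d ` {..<t})) * ln (real n))
             * real (Min (d ` {..<t})) powr (1 - 1 / (2 * real t))"
        using C0 True by simp
      ultimately show ?thesis by simp
    next
      case False
      interpret chain_setup n t k A d
        using n t1 False A d by unfold_locales auto
      show ?thesis using main_bound[OF assms] by (simp add: D_def mm_def)
    qed
  qed
qed

end
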